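(* (1) For all $\lambda,\mu\in Y^+$, $(\lambda+\mu)^{++}\le_{Q^\vee}\lambda^{++}+\mu^{++}$. (2) For all $\mu\in Y^+$, $v\in W^v$ and $\nu\in R_v(\mu)$, one has $\nu\in Y^+$ and $\nu^{++}\le_{Q^\vee}\mu^{++}$.
   Context: $I$ finite, $A$ a generalized Cartan matrix, $Y$ a free $\mathbb Z$-module of finite rank with free family $(\alpha_i^\vee)_{i\in I}$ and $\alpha_i\in\mathrm{Hom}(Y,\mathbb Z)$ (free family) with $\alpha_j(\alpha_i^\vee)=a_{i,j}$; $\mathbb A=Y\otimes\mathbb R$; $r_i(v)=v-\alpha_i(v)\alpha_i^\vee$; $W^v=\langle r_i\rangle$; $Q^\vee=\bigoplus\mathbb Z\alpha_i^\vee$, $Q^\vee_+=\bigoplus\mathbb N\alpha_i^\vee$, $x\le_{Q^\vee}y$ iff $y-x\in Q^\vee_+$; $C^v_f=\{\alpha_i>0\ \forall i\}$, $\mathcal T=\bigcup_w w\overline{C^v_f}$, $Y^+=Y\cap\mathcal T$. For $\lambda\in\mathcal T$, $\lambda^{++}$ is the unique element of $W^v\lambda\cap\overline{C^v_f}$. For $E\subset Y$, $R_i(E)=\mathrm{conv}(E\cup r_i(E))\cap(E+Q^\vee)$; $R_w(\lambda)=\bigcup R_{i_1}(\cdots R_{i_k}(\{\lambda\})\cdots)$ over all reduced expressions $w=r_{i_1}\cdots r_{i_k}$. *)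

theory Defs
  imports "HOL-Analysis.Analysis"
begin

text \<open>The lattice Y of finite rank is
realised as the integer points of real^'d, so that the real span A = Y (x) R is real^'d.
Linear forms Y -> Z are exactly v |-> a \<bullet> v with a an integer vector; the simple roots
alpha_i are represented by such vectors rt i, the simple coroots alpha_i^vee by cor i.\<close>

definition gcm :: "('i \<Rightarrow> 'i \<Rightarrow> int) \<Rightarrow> bool" where
  "gcm A \<longleftrightarrow> (\<forall>i. A i i = 2) \<and> (\<forall>i j. i \<noteq> j \<longrightarrow> A i j \<le> 0)
      \<and> (\<forall>i j. A i j = 0 \<longleftrightarrow> A j i = 0)"

definition Yset :: "(real^'d) set" where
  "Yset = {v. \<forall>k. v $ k \<in> \<int>}"

definition free_family :: "('i::finite \<Rightarrow> real^'d) \<Rightarrow> bool" where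
  "free_family f \<longleftrightarrow>
     (\<forall>c::'i \<Rightarrow> int. (\<Sum>i\<in>UNIV. of_int (c i) *\<^sub>R f i) = 0 \<longrightarrow> (\<forall>i. c i = 0))"

definition root_datum ::
  "('i::finite \<Rightarrow> 'i \<Rightarrow> int) \<Rightarrow> ('i \<Rightarrow> real^'d) \<Rightarrow> ('i \<Rightarrow> real^'d) \<Rightarrow> bool" where
  "root_datum A cor rt \<longleftrightarrow> gcm A \<and> (\<forall>i. cor i \<in> Yset) \<and> free_family cor
     \<and> (\<forall>i. rt i \<in> Yset) \<and> free_family rt
     \<and> (\<forall>i j. rt j \<bullet> cor i = of_int (A i j))"

definition kmr_refl :: "('i \<Rightarrow> real^'d) \<Rightarrow> ('i \<Rightarrow> real^'d) \<Rightarrow> 'i \<Rightarrow> real^'d \<Rightarrow> real^'d" where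
  "kmr_refl cor rt i v = v - (rt i \<bullet> v) *\<^sub>R cor i"

text \<open>The vectorial Weyl group W^v generated by the r_i (they are involutions, so the
monoid generated equals the group generated).\<close>
inductive_set kmr_W :: "('i \<Rightarrow> real^'d) \<Rightarrow> ('i \<Rightarrow> real^'d) \<Rightarrow> (real^'d \<Rightarrow> real^'d) set"
  for cor rt where
  id: "id \<in> kmr_W cor rt"
| step: "w \<in> kmr_W cor rt \<Longrightarrow> kmr_refl cor rt i \<circ> w \<in> kmr_W cor rt"

definition Cf :: "('i \<Rightarrow> real^'d) \<Rightarrow> (real^'d) set" where
  "Cf rt = {v. \<forall>i. 0 < rt i \<bullet> v}"

definition tits_cone :: "('i \<Rightarrow> real^'d) \<Rightarrow> ('i \<Rightarrow> real^'d) \<Rightarrow> (real^'d) set" where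
  "tits_cone cor rt = (\<Union>w\<in>kmr_W cor rt. w ` closure (Cf rt))"

definition Yplus :: "('i \<Rightarrow> real^'d) \<Rightarrow> ('i \<Rightarrow> real^'d) \<Rightarrow> (real^'d) set" where
  "Yplus cor rt = Yset \<inter> tits_cone cor rt"

text \<open>lambda^{++}: the unique element of W^v lambda in the closed fundamental chamber.\<close>
definition dom_elt :: "('i \<Rightarrow> real^'d) \<Rightarrow> ('i \<Rightarrow> real^'d) \<Rightarrow> real^'d \<Rightarrow> real^'d" where
  "dom_elt cor rt x =
     (THE \<mu>. \<mu> \<in> (\<lambda>w. w x) ` kmr_W cor rt \<inter> closure (Cf rt))"

definition Qcor :: "('i::finite \<Rightarrow> real^'d) \<Rightarrow> (real^'d) set" where
  "Qcor cor = {(\<Sum>i\<in>UNIV. of_int (n i) *\<^sub>R cor i) | n :: 'i \<Rightarrow> int. True}"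

definition Qcor_plus :: "('i::finite \<Rightarrow> real^'d) \<Rightarrow> (real^'d) set" where
  "Qcor_plus cor = {(\<Sum>i\<in>UNIV. of_nat (n i) *\<^sub>R cor i) | n :: 'i \<Rightarrow> nat. True}"

definition leQ :: "('i::finite \<Rightarrow> real^'d) \<Rightarrow> real^'d \<Rightarrow> real^'d \<Rightarrow> bool" where
  "leQ cor x y \<longleftrightarrow> y - x \<in> Qcor_plus cor"

definition R_i :: "('i::finite \<Rightarrow> real^'d) \<Rightarrow> ('i \<Rightarrow> real^'d) \<Rightarrow> 'i \<Rightarrow> (real^'d) set \<Rightarrow> (real^'d) set" where
  "R_i cor rt i E = convex hull (E \<union> kmr_refl cor rt i ` E)
      \<inter> {e + q | e q. e \<in> E \<and> q \<in> Qcor cor}"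

definition word_prod :: "('i \<Rightarrow> real^'d) \<Rightarrow> ('i \<Rightarrow> real^'d) \<Rightarrow> 'i list \<Rightarrow> real^'d \<Rightarrow> real^'d" where
  "word_prod cor rt is = foldr (\<lambda>i f. kmr_refl cor rt i \<circ> f) is id"

definition reduced_expr :: "('i \<Rightarrow> real^'d) \<Rightarrow> ('i \<Rightarrow> real^'d) \<Rightarrow> (real^'d \<Rightarrow> real^'d) \<Rightarrow> 'i list \<Rightarrow> bool" where
  "reduced_expr cor rt w is \<longleftrightarrow> word_prod cor rt is = w
     \<and> (\<forall>js. word_prod cor rt js = w \<longrightarrow> length is \<le> length js)"

definition R_w :: "('i::finite \<Rightarrow> real^'d) \<Rightarrow> ('i \<Rightarrow> real^'d) \<Rightarrow> (real^'d \<Rightarrow> real^'d) \<Rightarrow> real^'d \<Rightarrow> (real^'d) set" where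
  "R_w cor rt w x = (\<Union>is \<in> {is. reduced_expr cor rt w is}. foldr (R_i cor rt) is {x})"

end

theory Submission
  imports Defs
begin

locale KM =
  fixes A :: "'i::finite \<Rightarrow> 'i \<Rightarrow> int" and cor rt :: "'i \<Rightarrow> real^'d"
  assumes rd: "root_datum A cor rt"
begin

abbreviation r where "r \<equiv> kmr_refl cor rt"
abbreviation wp where "wp \<equiv> word_prod cor rt"
abbreviation W where "W \<equiv> kmr_W cor rt"

lemma gcmA: "gcm A" using rd by (simp add: root_datum_def)
lemma Aii: "A i i = 2" using gcmA by (simp add: gcm_def)
lemma Aij: "i \<noteq> j \<Longrightarrow> A i j \<le> 0" using gcmA by (simp add: gcm_def)
lemma Aij0: "A i j = 0 \<longleftrightarrow> A j i = 0" using gcmA by (simp add: gcm_def)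
lemma rtcor: "rt j \<bullet> cor i = of_int (A i j)" using rd by (simp add: root_datum_def)
lemma rtcor_ii: "rt i \<bullet> cor i = 2" by (simp add: rtcor Aii)
lemma corY: "cor i \<in> Yset" using rd by (simp add: root_datum_def)
lemma rtY: "rt i \<in> Yset" using rd by (simp add: root_datum_def)
lemma cor_free: "free_family cor" using rd by (simp add: root_datum_def)
lemma rt_free: "free_family rt" using rd by (simp add: root_datum_def)

lemma r_apply: "r i v = v - (rt i \<bullet> v) *\<^sub>R cor i" by (simp add: kmr_refl_def)
lemma rt_r: "rt k \<bullet> r i v = rt k \<bullet> v - (rt i \<bullet> v) * of_int (A i k)"
  by (simp add: kmr_refl_def inner_diff_right rtcor)
lemma r_r [simp]: "r i (r i v) = v"
  by (simp add: r_apply inner_diff_right rtcor_ii algebra_simps)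
lemma r_r_comp [simp]: "r i \<circ> r i = id" by (auto simp: fun_eq_iff)
lemma r_add: "r i (x + y) = r i x + r i y" by (simp add: r_apply inner_add_right algebra_simps)
lemma r_scale: "r i (c *\<^sub>R x) = c *\<^sub>R r i x" by (simp add: r_apply algebra_simps)
lemma r_linear: "linear (r i)" by (rule linearI) (simp_all add: r_add r_scale)

lemma wp_Nil [simp]: "wp [] = id" by (simp add: word_prod_def)
lemma wp_Cons [simp]: "wp (i # l) = r i \<circ> wp l" by (simp add: word_prod_def)
lemma wp_append: "wp (l1 @ l2) = wp l1 \<circ> wp l2" by (induction l1) auto
lemma wp_rev_pt: "wp (rev l) (wp l v) = v"
  by (induction l arbitrary: v) (auto simp: wp_append)
lemma wp_rev: "wp (rev l) \<circ> wp l = id"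
  by (simp add: fun_eq_iff wp_rev_pt)
lemma wp_rev': "wp l \<circ> wp (rev l) = id"
  using wp_rev[of "rev l"] by simp
lemma wp_linear: "linear (wp l)"
proof (induction l)
  case Nil show ?case unfolding wp_Nil by (rule linearI) auto
next
  case (Cons a l) show ?case unfolding wp_Cons by (rule linear_compose[OF Cons r_linear])
qed
lemma W_eq: "W = range wp"
proof (intro set_eqI iffI)
  fix w assume "w \<in> W" then show "w \<in> range wp"
  proof induction
    case id then show ?case by (metis rangeI wp_Nil)
  next
    case (step w i) then obtain l where "w = wp l" by auto
    then show ?case by (metis rangeI wp_Cons)
  qed
next
  fix w assume "w \<in> range wp" then obtain l where "w = wp l" by auto
  then show "w \<in> W" by (induction l arbitrary: w) (auto intro: kmr_W.intros)
qed
lemma wp_W [simp]: "wp l \<in> W" by (simp add: W_eq)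

end

fun cf :: "'i \<Rightarrow> real \<Rightarrow> real \<Rightarrow> real \<times> real \<Rightarrow> 'i list \<Rightarrow> real \<times> real" where
  "cf i a b st [] = st"
| "cf i a b (s,t) (x#l) = (if x = i then cf i a b (t*a - s, t) l else cf i a b (s, s*b - t) l)"

fun pq :: "'i \<Rightarrow> real \<Rightarrow> real \<Rightarrow> real \<Rightarrow> real \<Rightarrow> 'i list \<Rightarrow> real \<times> real" where
  "pq i a b X Y [] = (0,0)"
| "pq i a b X Y (x#l) = (case pq i a b X Y l of (P,Q) \<Rightarrow>
      if x = i then (- X - P + b*Q, Q) else (P, - Y + a*P - Q))"

fun alt :: "'a \<Rightarrow> 'a \<Rightarrow> nat \<Rightarrow> 'a list" where
  "alt x y 0 = []"
| "alt x y (Suc n) = x # alt y x n"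

lemma alt_length [simp]: "length (alt x y n) = n"
  by (induction n arbitrary: x y) auto
lemma alt_set: "set (alt x y n) \<subseteq> {x,y}"
  by (induction n arbitrary: x y) auto
lemma alt_add: "alt x y (m + n) = alt x y m @ (if even m then alt x y n else alt y x n)"
  by (induction m arbitrary: x y) auto

lemma alt_char:
  assumes "x \<noteq> y" "set ys \<subseteq> {x,y}" "ys \<noteq> []" "hd ys = x" "\<forall>p z q. ys \<noteq> p @ z # z # q"
  shows "ys = alt x y (length ys)"
  using assms
proof (induction ys arbitrary: x y)
  case Nil then show ?case by simp
next
  case (Cons x' rest)
  show ?case
  proof (cases rest)
    case Nil with Cons show ?thesis by simp
  next
    case (Cons y' rest')
    have "y' \<noteq> x" using Cons.prems(5) Cons.prems(4) unfolding \<open>rest = y' # rest'\<close>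
      by (metis append_Nil list.sel(1))
    then have "y' = y" using Cons.prems(2) Cons by auto
    have nd: "\<forall>p z q. rest \<noteq> p @ z # z # q"
      using Cons.prems(5) by (metis append_Cons)
    have "rest = alt y x (length rest)"
      using Cons.IH[of y x] Cons.prems nd \<open>y' = y\<close> \<open>rest = y' # rest'\<close> by auto
    then show ?thesis using Cons.prems by simp
  qed
qed

lemma cf_inf:
  fixes a b :: real
  assumes "a \<ge> 0" "b \<ge> 0" "a*b \<ge> 4" "i \<noteq> j"
  shows "(\<forall>s t. s\<ge>0 \<and> t\<ge>0 \<and> 2*t \<le> s*b \<longrightarrow> fst (cf i a b (s,t) (alt j i n)) \<ge> 0 \<and> snd (cf i a b (s,t) (alt j i n)) \<ge> 0) \<and>
         (\<forall>s t. s\<ge>0 \<and> t\<ge>0 \<and> 2 * s \<le> t*a \<longrightarrow> fst (cf i a b (s,t) (alt i j n)) \<ge> 0 \<and> snd (cf i a b (s,t) (alt i j n)) \<ge> 0)"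
proof (induction n)
  case 0 then show ?case by auto
next
  case (Suc n)
  have A: "2 * s \<le> (s*b - t)*a" if "s\<ge>0" "t\<ge>0" "2*t \<le> s*b" for s t
  proof -
    have "s*b/2 \<le> s*b - t" using that by linarith
    then have "(s*b/2)*a \<le> (s*b - t)*a" using assms by (intro mult_right_mono) auto
    moreover have "s*(a*b) \<ge> s*4" using that assms by (intro mult_left_mono) auto
    ultimately show ?thesis by (simp add: algebra_simps)
  qed
  have B: "2*t \<le> (t*a - s)*b" if "s\<ge>0" "t\<ge>0" "2 * s \<le> t*a" for s t
  proof -
    have "t*a/2 \<le> t*a - s" using that by linarith
    then have "(t*a/2)*b \<le> (t*a - s)*b" using assms by (intro mult_right_mono) auto
    moreover have "t*(a*b) \<ge> t*4" using that assms by (intro mult_left_mono) auto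
    ultimately show ?thesis by (simp add: algebra_simps)
  qed
  show ?case
  proof (rule conjI; intro allI impI)
    fix s t assume h: "s\<ge>0 \<and> t\<ge>0 \<and> 2*t \<le> s*b"
    have "s*b - t \<ge> 0" using h by linarith
    then show "fst (cf i a b (s,t) (alt j i (Suc n))) \<ge> 0 \<and> snd (cf i a b (s,t) (alt j i (Suc n))) \<ge> 0"
      using Suc.IH A[of s t] h assms(4)[symmetric] by auto
  next
    fix s t assume h: "s\<ge>0 \<and> t\<ge>0 \<and> 2 * s \<le> t*a"
    have "t*a - s \<ge> 0" using h by linarith
    then show "fst (cf i a b (s,t) (alt i j (Suc n))) \<ge> 0 \<and> snd (cf i a b (s,t) (alt i j (Suc n))) \<ge> 0"
      using Suc.IH B[of s t] h by auto
  qed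
qed

context KM begin

definition len :: "(real^'d \<Rightarrow> real^'d) \<Rightarrow> nat" where
  "len w = (LEAST n. \<exists>l. length l = n \<and> wp l = w)"

lemma len_le: "len (wp l) \<le> length l"
  unfolding len_def by (rule Least_le) auto
lemma len_ex: assumes "w \<in> W" obtains l where "wp l = w" "length l = len w"
proof -
  from assms obtain l0 where "wp l0 = w" by (auto simp: W_eq)
  then have "\<exists>n l. length l = n \<and> wp l = w" by auto
  from LeastI_ex[OF this] show ?thesis using that unfolding len_def by metis
qed
lemma len_comp: assumes "u \<in> W" "x \<in> W" shows "len (u \<circ> x) \<le> len u + len x"
proof -
  obtain lu lx where "wp lu = u" "length lu = len u" "wp lx = x" "length lx = len x"
    using len_ex assms by metis
  then show ?thesis using len_le[of "lu @ lx"] by (simp add: wp_append)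
qed
lemma len_r: assumes "x \<in> W" shows "len (r i \<circ> x) \<le> len x + 1"
proof -
  obtain lx where "wp lx = x" "length lx = len x" using len_ex assms by metis
  then show ?thesis using len_le[of "i # lx"] by simp
qed
lemma len_id0: "w \<in> W \<Longrightarrow> len w = 0 \<Longrightarrow> w = id"
  by (metis len_ex length_0_conv wp_Nil)

lemma cf_lemma:
  assumes "set l \<subseteq> {i,j}" "i \<noteq> j"
  shows "s*(rt i \<bullet> wp l v) + t*(rt j \<bullet> wp l v) =
     fst (cf i (- of_int (A i j)) (- of_int (A j i)) (s,t) l) * (rt i \<bullet> v) +
     snd (cf i (- of_int (A i j)) (- of_int (A j i)) (s,t) l) * (rt j \<bullet> v)"
  using assms(1)
proof (induction l arbitrary: s t)
  case Nil then show ?case by simp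
next
  case (Cons x l)
  let ?u = "wp l v"
  show ?case
  proof (cases "x = i")
    case True
    have "s*(rt i \<bullet> wp (x#l) v) + t*(rt j \<bullet> wp (x#l) v)
        = (t*(- of_int (A i j)) - s)*(rt i \<bullet> ?u) + t*(rt j \<bullet> ?u)"
      using True by (simp add: rt_r Aii algebra_simps)
    then show ?thesis using Cons True by simp
  next
    case False
    then have "x = j" using Cons.prems by auto
    have "s*(rt i \<bullet> wp (x#l) v) + t*(rt j \<bullet> wp (x#l) v)
        = s*(rt i \<bullet> ?u) + (s*(- of_int (A j i)) - t)*(rt j \<bullet> ?u)"
      using \<open>x = j\<close> by (simp add: rt_r Aii algebra_simps)
    then show ?thesis using Cons False by simp
  qed
qed

lemma pq_lemma:
  assumes "set l \<subseteq> {i,j}" "i \<noteq> j"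
  shows "wp l v = v + fst (pq i (- of_int (A i j)) (- of_int (A j i)) (rt i \<bullet> v) (rt j \<bullet> v) l) *\<^sub>R cor i
                    + snd (pq i (- of_int (A i j)) (- of_int (A j i)) (rt i \<bullet> v) (rt j \<bullet> v) l) *\<^sub>R cor j"
  using assms(1)
proof (induction l)
  case Nil then show ?case by simp
next
  case (Cons x l)
  obtain P Q where PQ: "pq i (- of_int (A i j)) (- of_int (A j i)) (rt i \<bullet> v) (rt j \<bullet> v) l = (P,Q)"
    by fastforce
  have IH: "wp l v = v + P *\<^sub>R cor i + Q *\<^sub>R cor j" using Cons PQ by simp
  show ?case
  proof (cases "x = i")
    case True
    have "rt i \<bullet> wp l v = rt i \<bullet> v + 2*P + Q * of_int (A j i)"
      using IH by (simp add: inner_add_right rtcor Aii)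
    then have w: "wp (x#l) v = wp l v - (rt i \<bullet> v + 2*P + Q * of_int (A j i)) *\<^sub>R cor i"
      using True by (simp add: r_apply)
    have "wp (x#l) v = (v + P *\<^sub>R cor i + Q *\<^sub>R cor j) - (rt i \<bullet> v + 2*P + Q * of_int (A j i)) *\<^sub>R cor i"
      by (subst w, subst IH, rule refl)
    then show ?thesis using True PQ
      by (simp del: wp_Cons add: vec_eq_iff algebra_simps)
  next
    case False
    then have "x = j" using Cons.prems by auto
    have "rt j \<bullet> wp l v = rt j \<bullet> v + P * of_int (A i j) + 2*Q"
      using IH by (simp add: inner_add_right rtcor Aii)
    then have w: "wp (x#l) v = wp l v - (rt j \<bullet> v + P * of_int (A i j) + 2*Q) *\<^sub>R cor j"
      using \<open>x = j\<close> by (simp add: r_apply)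
    have "wp (x#l) v = (v + P *\<^sub>R cor i + Q *\<^sub>R cor j) - (rt j \<bullet> v + P * of_int (A i j) + 2*Q) *\<^sub>R cor j"
      by (subst w, subst IH, rule refl)
    then show ?thesis using \<open>x = j\<close> \<open>i \<noteq> j\<close> PQ
      by (simp del: wp_Cons add: vec_eq_iff algebra_simps)
  qed
qed


lemma rank2_gen:
  assumes ij: "i \<noteq> j" and ys: "set ys \<subseteq> {i,j}"
  and H1: "\<forall>zs. set zs \<subseteq> {i,j} \<and> wp zs = wp ys \<longrightarrow> length ys \<le> length zs"
  and H2: "\<forall>zs. set zs \<subseteq> {i,j} \<and> wp zs = r i \<circ> wp ys \<longrightarrow> length ys \<le> length zs"
  and ab: "a = - of_int (A i j)" "b = - of_int (A j i)"
  and hyp: "(\<forall>n. 0 \<le> fst (cf i a b (1,0) (alt j i n)) \<and> 0 \<le> snd (cf i a b (1,0) (alt j i n)))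
     \<or> (\<exists>m>0. wp (alt j i m) = wp (alt i j m) \<and>
            (\<forall>n<m. 0 \<le> fst (cf i a b (1,0) (alt j i n)) \<and> 0 \<le> snd (cf i a b (1,0) (alt j i n))))"
  shows "\<exists>s t. s \<ge> 0 \<and> t \<ge> 0 \<and> (\<forall>v. rt i \<bullet> wp ys v = s * (rt i \<bullet> v) + t * (rt j \<bullet> v))"
proof (cases "ys = []")
  case True then show ?thesis by (intro exI[of _ 1] exI[of _ 0]) auto
next
  case False
  have nd: "\<forall>p z q. ys \<noteq> p @ z # z # q"
  proof (intro allI notI)
    fix p z q assume e: "ys = p @ z # z # q"
    have "wp (p @ q) = wp ys" by (simp add: e wp_append fun_eq_iff)
    moreover have "set (p @ q) \<subseteq> {i,j}" using ys e by auto
    ultimately have "length ys \<le> length (p @ q)" using H1 by blast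
    then show False using e by simp
  qed
  obtain x rest where xr: "ys = x # rest" using False by (cases ys) auto
  have "x \<noteq> i"
  proof
    assume "x = i"
    then have "wp rest = r i \<circ> wp ys" by (simp add: xr fun_eq_iff)
    moreover have "set rest \<subseteq> {i,j}" using ys xr by auto
    ultimately have "length ys \<le> length rest" using H2 by blast
    then show False using xr by simp
  qed
  then have "hd ys = j" using xr ys by auto
  have ysalt: "ys = alt j i (length ys)"
    by (rule alt_char) (use ij ys False \<open>hd ys = j\<close> nd in auto)
  define k where "k = length ys"
  have pos: "0 \<le> fst (cf i a b (1,0) (alt j i k)) \<and> 0 \<le> snd (cf i a b (1,0) (alt j i k))"
    using hyp
  proof
    assume "\<exists>m>0. wp (alt j i m) = wp (alt i j m) \<and>
            (\<forall>n<m. 0 \<le> fst (cf i a b (1,0) (alt j i n)) \<and> 0 \<le> snd (cf i a b (1,0) (alt j i n)))"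
    then obtain m where m: "m > 0" "wp (alt j i m) = wp (alt i j m)"
      "\<forall>n<m. 0 \<le> fst (cf i a b (1,0) (alt j i n)) \<and> 0 \<le> snd (cf i a b (1,0) (alt j i n))" by blast
    show ?thesis
    proof (cases "k < m")
      case True then show ?thesis using m by blast
    next
      case False
      obtain m' where m': "m = Suc m'" using m(1) by (cases m) auto
      define rest where "rest = (if even m then alt j i (k-m) else alt i j (k-m))"
      have "ys = alt j i m @ rest"
        using ysalt alt_add[of j i m "k - m"] False unfolding rest_def k_def by simp
      then have "wp ys = wp (alt i j m) \<circ> wp rest" by (simp add: wp_append m(2))
      then have e: "wp ys = r i \<circ> wp (alt j i m' @ rest)" by (simp add: m' wp_append comp_assoc)
      have "wp (alt j i m' @ rest) = r i \<circ> wp ys" by (simp add: e fun_eq_iff)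
      moreover have "set (alt j i m' @ rest) \<subseteq> {i,j}"
        using alt_set[of j i m'] alt_set[of j i "k-m"] alt_set[of i j "k-m"] unfolding rest_def by auto
      ultimately have "length ys \<le> length (alt j i m' @ rest)" using H2 by blast
      moreover have "length rest = k - m" unfolding rest_def by simp
      ultimately show ?thesis using False m' unfolding k_def by simp
    qed
  qed auto
  have "\<forall>v. rt i \<bullet> wp ys v = fst (cf i a b (1,0) ys) * (rt i \<bullet> v) + snd (cf i a b (1,0) ys) * (rt j \<bullet> v)"
    using cf_lemma[OF ys ij, of 1 _ 0] ab by simp
  then show ?thesis using pos ysalt unfolding k_def by (metis)
qed


lemma braid_from_pq:
  assumes ij: "i \<noteq> j"
    and h: "\<And>X Y. pq i (- of_int (A i j)) (- of_int (A j i)) X Y (alt j i m) = pq i (- of_int (A i j)) (- of_int (A j i)) X Y (alt i j m)"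
  shows "wp (alt j i m) = wp (alt i j m)"
proof
  fix v
  have s1: "set (alt j i m) \<subseteq> {i,j}" using alt_set[of j i m] by auto
  have s2: "set (alt i j m) \<subseteq> {i,j}" using alt_set[of i j m] by auto
  show "wp (alt j i m) v = wp (alt i j m) v"
    using pq_lemma[OF s1 ij, of v] pq_lemma[OF s2 ij, of v] h by simp
qed

lemma int_cases_small:
  fixes p q :: int
  assumes "p \<ge> 0" "q \<ge> 0" "p = 0 \<longleftrightarrow> q = 0" "\<not> p*q \<ge> 4"
  shows "(p = 0 \<and> q = 0) \<or> (p=1 \<and> q=1) \<or> (p=1 \<and> q=2) \<or> (p=2 \<and> q=1) \<or> (p=1 \<and> q=3) \<or> (p=3 \<and> q=1)"
proof (cases "p = 0")
  case True then show ?thesis using assms by auto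
next
  case False
  then have p1: "p \<ge> 1" "q \<ge> 1" using assms by auto
  have "p \<le> p*q" using p1 by (simp add: mult_le_cancel_left1)
  moreover have "q \<le> p*q" using p1 by (simp add: mult_le_cancel_right1)
  ultimately have "p \<le> 3" "q \<le> 3" using assms by auto
  then have "p \<in> {1,2,3}" "q \<in> {1,2,3}" using p1 by auto
  then show ?thesis using assms by auto
qed

lemma rank2:
  assumes ij: "i \<noteq> j" and ys: "set ys \<subseteq> {i,j}"
  and H1: "\<forall>zs. set zs \<subseteq> {i,j} \<and> wp zs = wp ys \<longrightarrow> length ys \<le> length zs"
  and H2: "\<forall>zs. set zs \<subseteq> {i,j} \<and> wp zs = r i \<circ> wp ys \<longrightarrow> length ys \<le> length zs"
  shows "\<exists>s t. s \<ge> 0 \<and> t \<ge> 0 \<and> (\<forall>v. rt i \<bullet> wp ys v = s * (rt i \<bullet> v) + t * (rt j \<bullet> v))"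
proof -
  define p where "p = - A i j"
  define q where "q = - A j i"
  define a :: real where "a = - of_int (A i j)"
  define b :: real where "b = - of_int (A j i)"
  have pq0: "p \<ge> 0" "q \<ge> 0" "p = 0 \<longleftrightarrow> q = 0"
    using Aij[OF ij] Aij[OF ij[symmetric]] Aij0[of i j] unfolding p_def q_def by auto
  have ab: "a = of_int p" "b = of_int q" unfolding a_def b_def p_def q_def by simp_all
  let ?pos = "\<lambda>n. 0 \<le> fst (cf i a b (1,0) (alt j i n)) \<and> 0 \<le> snd (cf i a b (1,0) (alt j i n))"
  have fin: "(\<forall>n. ?pos n) \<or> (\<exists>m>0. wp (alt j i m) = wp (alt i j m) \<and> (\<forall>n<m. ?pos n))"
    if "m > 0" "\<And>X Y. pq i a b X Y (alt j i m) = pq i a b X Y (alt i j m)" "\<forall>n<m. ?pos n" for m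
    using that braid_from_pq[OF ij, of m] unfolding a_def b_def by blast
  have hyp: "(\<forall>n. ?pos n) \<or> (\<exists>m>0. wp (alt j i m) = wp (alt i j m) \<and> (\<forall>n<m. ?pos n))"
  proof (cases "p*q \<ge> 4")
    case True
    have h: "a \<ge> 0" "b \<ge> 0" "a*b \<ge> 4" using pq0 True unfolding ab
      by (simp_all, metis of_int_le_iff of_int_mult of_int_numeral)
    have "?pos n" for n using conjunct1[OF cf_inf[OF h ij, of n], rule_format, of 1 0] h by simp
    then show ?thesis by blast
  next
    case False
    from int_cases_small[OF pq0 False] show ?thesis
    proof (elim disjE conjE)
      assume "p = 0" "q = 0"
      then have "a = 0" "b = 0" using ab by auto
      then show ?thesis using ij by (intro fin[of 2]) (auto simp: less_Suc_eq eval_nat_numeral algebra_simps)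
    next
      assume "p = 1" "q = 1"
      then have "a = 1" "b = 1" using ab by auto
      then show ?thesis using ij by (intro fin[of 3]) (auto simp: less_Suc_eq eval_nat_numeral algebra_simps)
    next
      assume "p = 1" "q = 2"
      then have "a = 1" "b = 2" using ab by auto
      then show ?thesis using ij by (intro fin[of 4]) (auto simp: less_Suc_eq eval_nat_numeral algebra_simps)
    next
      assume "p = 2" "q = 1"
      then have "a = 2" "b = 1" using ab by auto
      then show ?thesis using ij by (intro fin[of 4]) (auto simp: less_Suc_eq eval_nat_numeral algebra_simps)
    next
      assume "p = 1" "q = 3"
      then have "a = 1" "b = 3" using ab by auto
      then show ?thesis using ij by (intro fin[of 6]) (auto simp: less_Suc_eq eval_nat_numeral algebra_simps)
    next
      assume "p = 3" "q = 1"
      then have "a = 3" "b = 1" using ab by auto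
      then show ?thesis using ij by (intro fin[of 6]) (auto simp: less_Suc_eq eval_nat_numeral algebra_simps)
    qed
  qed
  show ?thesis by (rule rank2_gen[OF ij ys H1 H2 a_def b_def hyp])
qed

end

context KM begin

definition posf :: "'i \<Rightarrow> (real^'d \<Rightarrow> real^'d) \<Rightarrow> bool" where
  "posf i w \<longleftrightarrow> (\<exists>c. (\<forall>k. 0 \<le> c k) \<and> (\<forall>v. rt i \<bullet> w v = (\<Sum>k\<in>UNIV. c k * (rt k \<bullet> v))))"

lemma delta_sum: "(\<Sum>k\<in>UNIV. (if k = (i::'i) then 1 else 0) * (f k::real)) = f i"
proof -
  have "(\<Sum>k\<in>UNIV. (if k = i then 1 else 0) * f k) = (\<Sum>k\<in>UNIV. if k = i then f k else 0)"
    by (rule sum.cong) auto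
  then show ?thesis by (simp add: sum.delta sum.delta')
qed

lemma posf_id: "posf i id"
  unfolding posf_def
  by (rule exI[of _ "\<lambda>k. if k = i then 1 else 0"]) (auto simp: delta_sum)

lemma key_ind:
  "\<forall>w i. w \<in> W \<longrightarrow> len w = n \<longrightarrow> len w \<le> len (r i \<circ> w) \<longrightarrow> posf i w"
proof (induction n rule: less_induct)
  case (less n)
  show ?case
  proof (intro allI impI)
    fix w i assume wW: "w \<in> W" and lw: "len w = n" and li: "len w \<le> len (r i \<circ> w)"
    show "posf i w"
    proof (cases "n = 0")
      case True then show ?thesis using len_id0[OF wW] lw posf_id by simp
    next
      case False
      obtain js where js: "wp js = w" "length js = n" using len_ex[OF wW] lw by metis
      then obtain j js' where jj: "js = j # js'" using False by (cases js) auto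
      define w' where "w' = wp js'"
      have w: "w = r j \<circ> w'" using js jj w'_def by simp
      have w'W: "w' \<in> W" unfolding w'_def by simp
      have lw': "len w' = n - 1"
        using len_le[of js'] len_r[OF w'W, of j] js jj w lw unfolding w'_def by auto
      have "j \<noteq> i"
      proof
        assume "j = i"
        then have "r i \<circ> w = w'" using w by (simp add: fun_eq_iff)
        then show False using li lw lw' False by simp
      qed
      define S where "S = {(ys, x). set ys \<subseteq> {i,j} \<and> x \<in> W \<and> wp ys \<circ> x = w \<and> len x + length ys = n}"
      have "([j], w') \<in> S" unfolding S_def using w w'W lw' False by auto
      from ex_has_least_nat[of "\<lambda>p. p \<in> S", OF this, of "\<lambda>p. len (snd p)"]
      obtain ys x where yx: "(ys, x) \<in> S" and mn: "\<forall>ys' x'. (ys', x') \<in> S \<longrightarrow> len x \<le> len x'"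
        by auto
      have ys: "set ys \<subseteq> {i,j}" and xW: "x \<in> W" and wyx: "wp ys \<circ> x = w" and lyx: "len x + length ys = n"
        using yx unfolding S_def by auto
      have lx: "len x < n" using mn \<open>([j], w') \<in> S\<close> lw' False by fastforce
      have xk: "len x \<le> len (r k \<circ> x)" if "k \<in> {i,j}" for k
      proof (rule ccontr)
        assume "\<not> len x \<le> len (r k \<circ> x)"
        then have lt: "len (r k \<circ> x) < len x" by simp
        have rkxW: "r k \<circ> x \<in> W" using xW by (metis W_eq imageE rangeI wp_Cons)
        have e: "wp (ys @ [k]) \<circ> (r k \<circ> x) = w" using wyx by (simp add: wp_append fun_eq_iff)
        have "n = len (wp (ys @ [k]) \<circ> (r k \<circ> x))" using e lw by simp
        also have "\<dots> \<le> len (wp (ys @ [k])) + len (r k \<circ> x)" using len_comp rkxW by simp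
        also have "\<dots> \<le> length ys + 1 + len (r k \<circ> x)" using len_le[of "ys @ [k]"] by simp
        finally have "len (r k \<circ> x) + length (ys @ [k]) = n" using lt lyx by simp
        then have "(ys @ [k], r k \<circ> x) \<in> S" unfolding S_def using ys that rkxW e by auto
        then show False using mn lt by fastforce
      qed
      have pi: "posf i x" and pj: "posf j x"
        using less.IH[rule_format, OF lx xW refl] xk by auto
      have H1: "\<forall>zs. set zs \<subseteq> {i,j} \<and> wp zs = wp ys \<longrightarrow> length ys \<le> length zs"
      proof (intro allI impI)
        fix zs assume h: "set zs \<subseteq> {i,j} \<and> wp zs = wp ys"
        have "n = len (wp zs \<circ> x)" using h wyx lw by simp
        also have "\<dots> \<le> length zs + len x" using len_comp[OF wp_W xW, of zs] len_le[of zs] by simp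
        finally show "length ys \<le> length zs" using lyx by simp
      qed
      have H2: "\<forall>zs. set zs \<subseteq> {i,j} \<and> wp zs = r i \<circ> wp ys \<longrightarrow> length ys \<le> length zs"
      proof (intro allI impI)
        fix zs assume h: "set zs \<subseteq> {i,j} \<and> wp zs = r i \<circ> wp ys"
        have "r i \<circ> w = wp zs \<circ> x" using h wyx by (simp add: comp_assoc)
        then have "n \<le> len (wp zs \<circ> x)" using li lw by simp
        also have "\<dots> \<le> length zs + len x" using len_comp[OF wp_W xW, of zs] len_le[of zs] by simp
        finally show "length ys \<le> length zs" using lyx by simp
      qed
      obtain s t where st: "s \<ge> 0" "t \<ge> 0" "\<forall>v. rt i \<bullet> wp ys v = s * (rt i \<bullet> v) + t * (rt j \<bullet> v)"
        using rank2[OF \<open>j \<noteq> i\<close>[symmetric] ys H1 H2] by blast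
      obtain cx where cx: "\<forall>k. 0 \<le> cx k" "\<forall>v. rt i \<bullet> x v = (\<Sum>k\<in>UNIV. cx k * (rt k \<bullet> v))"
        using pi unfolding posf_def by blast
      obtain cy where cy: "\<forall>k. 0 \<le> cy k" "\<forall>v. rt j \<bullet> x v = (\<Sum>k\<in>UNIV. cy k * (rt k \<bullet> v))"
        using pj unfolding posf_def by blast
      show ?thesis unfolding posf_def
      proof (intro exI[of _ "\<lambda>k. s * cx k + t * cy k"] conjI allI)
        fix k show "0 \<le> s * cx k + t * cy k" using st cx cy by simp
      next
        fix v
        have "rt i \<bullet> w v = rt i \<bullet> wp ys (x v)" using wyx by (metis comp_apply)
        also have "\<dots> = s * (rt i \<bullet> x v) + t * (rt j \<bullet> x v)" using st by simp
        also have "\<dots> = (\<Sum>k\<in>UNIV. (s * cx k + t * cy k) * (rt k \<bullet> v))"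
          using cx cy by (simp add: sum_distrib_left sum.distrib algebra_simps)
        finally show "rt i \<bullet> w v = (\<Sum>k\<in>UNIV. (s * cx k + t * cy k) * (rt k \<bullet> v))" .
      qed
    qed
  qed
qed

lemma key: "w \<in> W \<Longrightarrow> len w \<le> len (r i \<circ> w) \<Longrightarrow> posf i w"
  using key_ind by blast

end

context KM begin

lemma inner_Ints: "u \<in> Yset \<Longrightarrow> v \<in> Yset \<Longrightarrow> u \<bullet> v \<in> \<int>"
  unfolding Yset_def inner_vec_def by (auto intro!: Ints_mult)
lemma Yset_add: "u \<in> Yset \<Longrightarrow> v \<in> Yset \<Longrightarrow> u + v \<in> Yset" by (auto simp: Yset_def)
lemma Yset_diff: "u \<in> Yset \<Longrightarrow> v \<in> Yset \<Longrightarrow> u - v \<in> Yset" by (auto simp: Yset_def)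
lemma Yset_scale: "c \<in> \<int> \<Longrightarrow> v \<in> Yset \<Longrightarrow> c *\<^sub>R v \<in> Yset" by (auto simp: Yset_def)
lemma r_Y: "v \<in> Yset \<Longrightarrow> r i v \<in> Yset"
  unfolding r_apply by (intro Yset_diff Yset_scale inner_Ints rtY corY)
lemma wp_Y: "v \<in> Yset \<Longrightarrow> wp l v \<in> Yset" by (induction l) (auto intro: r_Y)
lemma W_Y: "w \<in> W \<Longrightarrow> v \<in> Yset \<Longrightarrow> w v \<in> Yset" by (auto simp: W_eq wp_Y)

lemma W_comp: "u \<in> W \<Longrightarrow> w \<in> W \<Longrightarrow> u \<circ> w \<in> W"
  by (auto simp: W_eq wp_append[symmetric])
lemma r_W: "w \<in> W \<Longrightarrow> r i \<circ> w \<in> W"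
  by (auto simp: W_eq) (metis rangeI wp_Cons)
lemma r_in_W: "r i \<in> W" using r_W[of id] by (simp add: W_eq) (metis rangeI wp_Nil)
lemma id_W: "id \<in> W" by (simp add: W_eq) (metis rangeI wp_Nil)
lemma W_inv: assumes "w \<in> W" obtains u where "u \<in> W" "u \<circ> w = id" "w \<circ> u = id"
proof -
  from assms obtain l where "w = wp l" by (auto simp: W_eq)
  then show ?thesis using that[of "wp (rev l)"] wp_rev wp_rev' by auto
qed
lemma W_linear: "w \<in> W \<Longrightarrow> linear w" by (auto simp: W_eq wp_linear)

lemma Qp_iff: "v \<in> Qcor_plus cor \<longleftrightarrow> (\<exists>n. v = (\<Sum>i\<in>UNIV. of_nat (n i) *\<^sub>R cor i))"
  by (auto simp: Qcor_plus_def)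
lemma Q_iff: "v \<in> Qcor cor \<longleftrightarrow> (\<exists>n. v = (\<Sum>i\<in>UNIV. of_int (n i) *\<^sub>R cor i))"
  by (auto simp: Qcor_def)
lemma Qp_add: "u \<in> Qcor_plus cor \<Longrightarrow> v \<in> Qcor_plus cor \<Longrightarrow> u + v \<in> Qcor_plus cor"
proof -
  assume "u \<in> Qcor_plus cor" "v \<in> Qcor_plus cor"
  then obtain n m where "u = (\<Sum>i\<in>UNIV. of_nat (n i) *\<^sub>R cor i)" "v = (\<Sum>i\<in>UNIV. of_nat (m i) *\<^sub>R cor i)"
    unfolding Qp_iff by blast
  then have "u + v = (\<Sum>i\<in>UNIV. of_nat (n i + m i) *\<^sub>R cor i)"
    by (simp add: scaleR_add_left sum.distrib)
  then show ?thesis unfolding Qp_iff by (rule exI[of _ "\<lambda>i. n i + m i"])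
qed
lemma Q_add: "u \<in> Qcor cor \<Longrightarrow> v \<in> Qcor cor \<Longrightarrow> u + v \<in> Qcor cor"
proof -
  assume "u \<in> Qcor cor" "v \<in> Qcor cor"
  then obtain n m where "u = (\<Sum>i\<in>UNIV. of_int (n i) *\<^sub>R cor i)" "v = (\<Sum>i\<in>UNIV. of_int (m i) *\<^sub>R cor i)"
    unfolding Q_iff by blast
  then have "u + v = (\<Sum>i\<in>UNIV. of_int (n i + m i) *\<^sub>R cor i)"
    by (simp add: scaleR_add_left sum.distrib)
  then show ?thesis unfolding Q_iff by (rule exI[of _ "\<lambda>i. n i + m i"])
qed
lemma Q_neg: "u \<in> Qcor cor \<Longrightarrow> - u \<in> Qcor cor"
proof -
  assume "u \<in> Qcor cor"
  then obtain n where "u = (\<Sum>i\<in>UNIV. of_int (n i) *\<^sub>R cor i)"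
    unfolding Q_iff by blast
  then have "- u = (\<Sum>i\<in>UNIV. of_int (- n i) *\<^sub>R cor i)"
    by (simp add: sum_negf[symmetric])
  then show ?thesis unfolding Q_iff by (rule exI[of _ "\<lambda>i. - n i"])
qed
lemma Q_diff: "u \<in> Qcor cor \<Longrightarrow> v \<in> Qcor cor \<Longrightarrow> u - v \<in> Qcor cor"
  using Q_add[OF _ Q_neg] by (metis diff_conv_add_uminus)
lemma Qp_Q: "u \<in> Qcor_plus cor \<Longrightarrow> u \<in> Qcor cor"
proof -
  assume "u \<in> Qcor_plus cor"
  then obtain n where "u = (\<Sum>i\<in>UNIV. of_nat (n i) *\<^sub>R cor i)" unfolding Qp_iff by blast
  then have "u = (\<Sum>i\<in>UNIV. of_int (int (n i)) *\<^sub>R cor i)" by simp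
  then show ?thesis unfolding Q_iff by (rule exI[of _ "\<lambda>i. int (n i)"])
qed
lemma Q_zero: "0 \<in> Qcor cor" unfolding Q_iff by (rule exI[of _ "\<lambda>i. 0"]) simp
lemma Qp_zero: "0 \<in> Qcor_plus cor" unfolding Qp_iff by (rule exI[of _ "\<lambda>i. 0"]) simp
lemma Q_Y: "u \<in> Qcor cor \<Longrightarrow> u \<in> Yset"
proof -
  assume "u \<in> Qcor cor"
  then obtain n where "u = (\<Sum>i\<in>UNIV. of_int (n i) *\<^sub>R cor i)" by (auto simp: Q_iff)
  moreover have "(\<Sum>i\<in>F. of_int (n i) *\<^sub>R cor i) \<in> Yset" if "finite F" for F
    using that
  proof induction
    case empty then show ?case by (simp add: Yset_def)
  next
    case (insert a F) then show ?case by (simp add: Yset_add Yset_scale corY)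
  qed
  ultimately show ?thesis by simp
qed
lemma Q_cor: "c \<in> \<int> \<Longrightarrow> c *\<^sub>R cor j \<in> Qcor cor"
proof -
  assume "c \<in> \<int>" then obtain N where N: "c = of_int N" by (auto elim: Ints_cases)
  have "(\<Sum>i\<in>UNIV. of_int (if i = j then N else 0) *\<^sub>R cor i) = (\<Sum>i\<in>UNIV. if i = j then c *\<^sub>R cor i else 0)"
    by (rule sum.cong) (auto simp: N)
  also have "\<dots> = c *\<^sub>R cor j" by (simp add: sum.delta)
  finally show ?thesis unfolding Q_iff by metis
qed

lemma W_coset: "w \<in> W \<Longrightarrow> v \<in> Yset \<Longrightarrow> w v - v \<in> Qcor cor"
proof -
  assume "w \<in> W" "v \<in> Yset"
  then obtain l where "w = wp l" by (auto simp: W_eq)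
  moreover have "wp l v - v \<in> Qcor cor" using \<open>v \<in> Yset\<close>
  proof (induction l)
    case Nil then show ?case by (simp add: Q_zero)
  next
    case (Cons i l)
    have "wp (i#l) v - v = (wp l v - v) + (- ((rt i \<bullet> wp l v) *\<^sub>R cor i))"
      by (simp add: r_apply)
    also have "\<dots> \<in> Qcor cor"
      using Cons by (intro Q_add Q_neg Q_cor inner_Ints rtY wp_Y) auto
    finally show ?case .
  qed
  ultimately show ?thesis by simp
qed

lemma dichotomy:
  assumes "w \<in> W"
  shows "posf i w \<or> (\<exists>c. (\<forall>k. 0 \<le> c k) \<and> (\<forall>v. rt i \<bullet> w v = - (\<Sum>k\<in>UNIV. c k * (rt k \<bullet> v))))"
proof (cases "len w \<le> len (r i \<circ> w)")
  case True then show ?thesis using key assms by blast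
next
  case False
  define w'' where "w'' = r i \<circ> w"
  have w''W: "w'' \<in> W" unfolding w''_def using assms by (rule r_W)
  have "r i \<circ> w'' = w" unfolding w''_def by (simp add: fun_eq_iff)
  then have "posf i w''" using key[OF w''W, of i] False unfolding w''_def by simp
  then obtain c where c: "\<forall>k. 0 \<le> c k" "\<forall>v. rt i \<bullet> w'' v = (\<Sum>k\<in>UNIV. c k * (rt k \<bullet> v))"
    unfolding posf_def by blast
  have "rt i \<bullet> w v = - (rt i \<bullet> w'' v)" for v
    unfolding w''_def by (simp add: rt_r Aii)
  then show ?thesis using c by auto
qed

end

lemma rat_common_denom:
  fixes q :: "'i \<Rightarrow> rat"
  assumes "finite S"
  shows "\<exists>d::int. d > 0 \<and> (\<forall>i\<in>S. \<exists>n::int. q i * of_int d = of_int n)"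
  using assms
proof induction
  case empty then show ?case by (intro exI[of _ 1]) auto
next
  case (insert i S)
  then obtain d where d: "d > 0" "\<forall>j\<in>S. \<exists>n::int. q j * of_int d = of_int n" by blast
  obtain a b where ab: "quotient_of (q i) = (a, b)" by fastforce
  have b0: "b > 0" using quotient_of_denom_pos[OF ab] .
  have qi: "q i = of_int a / of_int b" using quotient_of_div[OF ab] .
  show ?case
  proof (rule exI[of _ "d * b"], intro conjI ballI)
    show "d * b > 0" using d b0 by simp
  next
    fix j assume "j \<in> insert i S"
    then show "\<exists>n::int. q j * of_int (d * b) = of_int n"
    proof (cases "j = i")
      case True
      then have "q j * of_int (d * b) = of_int (a * d)" using qi b0 by (simp add: field_simps)
      then show ?thesis by blast
    next
      case False
      then have "j \<in> S" using \<open>j \<in> insert i S\<close> by simp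
      then obtain n where "q j * of_int d = of_int n" using d by blast
      then have "q j * of_int (d * b) = of_int (n * b)" by (simp add: algebra_simps)
      then show ?thesis by blast
    qed
  qed
qed

lemma free_real:
  fixes f :: "'i::finite \<Rightarrow> real^'d"
  assumes fY: "\<forall>i. f i \<in> Yset" and ff: "free_family f"
    and c: "(\<Sum>i\<in>UNIV. c i *\<^sub>R f i) = 0"
  shows "c i0 = 0"
proof (rule ccontr)
  assume ci0: "c i0 \<noteq> 0"
  interpret vsp: vector_space_pair "\<lambda>q (x::real). of_rat q * x" "(*) :: rat \<Rightarrow> rat \<Rightarrow> rat"
    by unfold_locales (simp_all add: algebra_simps of_rat_add of_rat_mult)
  have ind: "vsp.vs1.independent {c i0}" using ci0 by simp
  obtain g where g: "Vector_Spaces.linear (\<lambda>q (x::real). of_rat q * x) ((*) :: rat \<Rightarrow> rat \<Rightarrow> rat) g"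
      "g (c i0) = 1"
    using vsp.linear_independent_extend[OF ind, of "\<lambda>_. 1"] by auto
  then interpret gh: module_hom "\<lambda>q (x::real). of_rat q * x" "(*) :: rat \<Rightarrow> rat \<Rightarrow> rat" g
    by (simp add: module_hom_iff_linear)
  have gint: "g (of_int n * x) = of_int n * g x" for n x
    using gh.scale[of "of_int n" x] by simp
  obtain z where z: "\<And>i m. f i $ m = of_int (z i m)"
  proof -
    have "\<forall>i m. \<exists>n. f i $ m = of_int n"
    proof (intro allI)
      fix i m have "f i $ m \<in> \<int>" using fY by (simp add: Yset_def)
      then show "\<exists>n. f i $ m = of_int n" by (auto elim: Ints_cases)
    qed
    then have "\<exists>z. \<forall>i m. f i $ m = of_int (z i m)" by metis
    then show ?thesis using that by blast
  qed
  have eqm: "(\<Sum>i\<in>UNIV. g (c i) * of_int (z i m)) = 0" for m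
  proof -
    have "(\<Sum>i\<in>UNIV. c i * of_int (z i m)) = 0"
      using arg_cong[OF c, of "\<lambda>v. v $ m"] z by simp
    then have s0: "g (\<Sum>i\<in>UNIV. of_int (z i m) * c i) = 0" using gh.zero by (simp add: mult.commute)
    have "g (\<Sum>i\<in>UNIV. of_int (z i m) * c i) = (\<Sum>i\<in>UNIV. g (of_int (z i m) * c i))" by (rule gh.sum)
    also have "\<dots> = (\<Sum>i\<in>UNIV. of_int (z i m) * g (c i))" by (simp only: gint)
    finally have "(\<Sum>i\<in>UNIV. of_int (z i m) * g (c i)) = 0" using s0 by simp
    then show ?thesis by (simp add: mult.commute)
  qed
  obtain d where d: "d > 0" "\<forall>i\<in>UNIV. \<exists>n::int. g (c i) * of_int d = of_int n"
    using rat_common_denom[of UNIV "\<lambda>i. g (c i)"] by auto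
  have "\<forall>i. \<exists>n::int. g (c i) * of_int d = of_int n" using d(2) by simp
  then have "\<exists>nn. \<forall>i. g (c i) * of_int d = of_int (nn i)" by (rule choice)
  then obtain nn where nn0: "\<forall>i. g (c i) * of_int d = of_int (nn i)" by blast
  have nn: "\<And>i. g (c i) * of_int d = of_int (nn i)" using nn0 by blast
  have "(\<Sum>i\<in>UNIV. of_int (nn i) *\<^sub>R f i) = (0::real^'d)"
  proof (subst vec_eq_iff, intro allI)
    fix m
    have "(\<Sum>i\<in>UNIV. of_int (nn i) * of_int (z i m)) = of_int d * (\<Sum>i\<in>UNIV. g (c i) * of_int (z i m))"
      by (simp add: sum_distrib_left nn[symmetric] algebra_simps)
    also have "\<dots> = (0::rat)" using eqm by simp
    finally have A: "(of_int (\<Sum>i\<in>UNIV. nn i * z i m) :: rat) = 0" by simp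
    then have B: "(\<Sum>i\<in>UNIV. nn i * z i m) = 0" by (simp only: of_int_eq_0_iff)
    then have "(of_int (\<Sum>i\<in>UNIV. nn i * z i m) :: real) = 0" by (simp only: of_int_0)
    then have "(\<Sum>i\<in>UNIV. of_int (nn i) * (of_int (z i m)::real)) = 0" by simp
    then show "(\<Sum>i\<in>UNIV. of_int (nn i) *\<^sub>R f i) $ m = (0::real^'d) $ m" by (simp add: z)
  qed
  then have "nn i0 = 0" using ff unfolding free_family_def by blast
  then have "g (c i0) * of_int d = 0" using nn by simp
  then show False using g(2) d(1) by simp
qed



context KM begin

lemma dom_Q_ind:
  assumes xY: "x \<in> Yset" and xd: "\<forall>k. 0 \<le> rt k \<bullet> x"
  shows "\<forall>w. w \<in> W \<longrightarrow> len w = n \<longrightarrow> x - w x \<in> Qcor_plus cor"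
proof (induction n rule: less_induct)
  case (less n)
  show ?case
  proof (intro allI impI)
    fix w assume wW: "w \<in> W" and lw: "len w = n"
    show "x - w x \<in> Qcor_plus cor"
    proof (cases "n = 0")
      case True then show ?thesis using len_id0[OF wW] lw Qp_zero by simp
    next
      case False
      obtain js where js: "wp js = w" "length js = n" using len_ex[OF wW] lw by metis
      then obtain j js' where jj: "js = j # js'" using False by (cases js) auto
      define w' where "w' = wp js'"
      have w: "w = r j \<circ> w'" using js jj w'_def by simp
      have w'W: "w' \<in> W" unfolding w'_def by simp
      have lw': "len w' = n - 1"
        using len_le[of js'] len_r[OF w'W, of j] js jj w lw unfolding w'_def by auto
      have "posf j w'" using key[OF w'W, of j] lw' lw w False by simp
      then obtain c where c1: "\<forall>k. 0 \<le> c k" and c2: "\<forall>v. rt j \<bullet> w' v = (\<Sum>k\<in>UNIV. c k * (rt k \<bullet> v))"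
        unfolding posf_def by (elim exE conjE) (rule that; assumption)
      have c: "\<forall>k. 0 \<le> c k" "rt j \<bullet> w' x = (\<Sum>k\<in>UNIV. c k * (rt k \<bullet> x))"
        using c1 c2 by auto
      have tt: "0 \<le> c k * (rt k \<bullet> x)" for k using c(1) xd by simp
      have "0 \<le> (\<Sum>k\<in>UNIV. c k * (rt k \<bullet> x))" by (rule sum_nonneg) (rule tt)
      then have nn: "rt j \<bullet> w' x \<ge> 0" using c(2) by linarith
      have "rt j \<bullet> w' x \<in> \<int>" by (rule inner_Ints[OF rtY W_Y[OF w'W xY]])
      then obtain N where N: "rt j \<bullet> w' x = of_int N" by (auto elim: Ints_cases)
      have N0: "N \<ge> 0" using nn N by simp
      have "x - w' x \<in> Qcor_plus cor" using less.IH[rule_format, OF _ w'W lw'] False by simp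
      then obtain m where m: "x - w' x = (\<Sum>i\<in>UNIV. of_nat (m i) *\<^sub>R cor i)" by (auto simp: Qp_iff)
      have "x - w x = (x - w' x) + (rt j \<bullet> w' x) *\<^sub>R cor j" using w by (simp add: r_apply)
      also have "\<dots> = (\<Sum>i\<in>UNIV. of_nat (m i + (if i = j then nat N else 0)) *\<^sub>R cor i)"
      proof -
        have t: "of_nat (m i + (if i = j then nat N else 0)) *\<^sub>R cor i
            = of_nat (m i) *\<^sub>R cor i + (if i = j then of_int N *\<^sub>R cor i else 0)" for i
          by (cases "i = j") (simp_all add: scaleR_add_left N0)
        have "(\<Sum>i\<in>UNIV. of_nat (m i + (if i = j then nat N else 0)) *\<^sub>R cor i)
          = (\<Sum>i\<in>UNIV. of_nat (m i) *\<^sub>R cor i + (if i = j then of_int N *\<^sub>R cor i else 0))"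
          by (rule sum.cong[OF refl t])
        also have "\<dots> = (\<Sum>i\<in>UNIV. of_nat (m i) *\<^sub>R cor i) + (\<Sum>i\<in>UNIV. if i = j then of_int N *\<^sub>R cor i else 0)"
          by (rule sum.distrib)
        also have "\<dots> = (x - w' x) + (rt j \<bullet> w' x) *\<^sub>R cor j" by (simp add: m N sum.delta)
        finally show ?thesis by simp
      qed
      finally show ?thesis unfolding Qp_iff by (rule exI[of _ "\<lambda>i. m i + (if i = j then nat N else 0)"])
    qed
  qed
qed

lemma dom_Q: "x \<in> Yset \<Longrightarrow> \<forall>k. 0 \<le> rt k \<bullet> x \<Longrightarrow> w \<in> W \<Longrightarrow> x - w x \<in> Qcor_plus cor"
proof -
  assume a: "x \<in> Yset" "\<forall>k. 0 \<le> rt k \<bullet> x" "w \<in> W"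
  have "\<forall>w'. w' \<in> W \<longrightarrow> len w' = len w \<longrightarrow> x - w' x \<in> Qcor_plus cor"
    by (rule dom_Q_ind[OF a(1,2)])
  then show ?thesis using a(3) by simp
qed

lemma uniq:
  assumes "x \<in> Yset" "\<forall>k. 0 \<le> rt k \<bullet> x" "y \<in> Yset" "\<forall>k. 0 \<le> rt k \<bullet> y" "w \<in> W" "w x = y"
  shows "x = y"
proof -
  obtain u where u: "u \<in> W" "u \<circ> w = id" using W_inv[OF assms(5)] by blast
  have "u y = x" using u assms(6) by (metis comp_apply id_apply)
  have "x - y \<in> Qcor_plus cor" using dom_Q[OF assms(1,2,5)] assms(6) by simp
  then obtain n where n: "x - y = (\<Sum>i\<in>UNIV. of_nat (n i) *\<^sub>R cor i)" by (auto simp: Qp_iff)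
  have "y - x \<in> Qcor_plus cor" using dom_Q[OF assms(3,4) u(1)] \<open>u y = x\<close> by simp
  then obtain m where m: "y - x = (\<Sum>i\<in>UNIV. of_nat (m i) *\<^sub>R cor i)" by (auto simp: Qp_iff)
  have "(\<Sum>i\<in>UNIV. of_int (int (n i + m i)) *\<^sub>R cor i) = (x - y) + (y - x)"
    by (simp add: n m scaleR_add_left sum.distrib)
  also have "\<dots> = 0" by simp
  finally have z: "(\<Sum>i\<in>UNIV. of_int (int (n i + m i)) *\<^sub>R cor i) = 0" .
  have "\<forall>i. int (n i + m i) = 0" by (intro allI, rule cor_free[unfolded free_family_def, rule_format, OF z])
  then have "\<forall>i. n i = 0" by (metis add_eq_0_iff_both_eq_0 of_nat_add of_nat_eq_0_iff)
  then show ?thesis using n by simp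
qed

end

context KM begin

lemma cor_real: "(\<Sum>i\<in>UNIV. c i *\<^sub>R cor i) = 0 \<Longrightarrow> c k = 0"
  using free_real[of cor c k] corY cor_free by blast
lemma rt_real: "(\<Sum>i\<in>UNIV. c i *\<^sub>R rt i) = 0 \<Longrightarrow> c k = 0"
  using free_real[of rt c k] rtY rt_free by blast

lemma lc_zero: "(\<forall>v. (\<Sum>k\<in>UNIV. e k * (rt k \<bullet> v)) = 0) \<Longrightarrow> e i = 0"
proof -
  assume h: "\<forall>v. (\<Sum>k\<in>UNIV. e k * (rt k \<bullet> v)) = 0"
  define u where "u = (\<Sum>k\<in>UNIV. e k *\<^sub>R rt k)"
  have "u \<bullet> u = (\<Sum>k\<in>UNIV. e k * (rt k \<bullet> u))"
    unfolding u_def[of] by (simp add: inner_sum_left)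
  also have "\<dots> = 0" using h by blast
  finally have "u = 0" by simp
  then show "e i = 0" unfolding u_def by (rule rt_real)
qed

lemma lc_inj: "(\<forall>v. (\<Sum>k\<in>UNIV. c k * (rt k \<bullet> v)) = (\<Sum>k\<in>UNIV. d k * (rt k \<bullet> v))) \<Longrightarrow> c i = d i"
proof -
  assume h: "\<forall>v. (\<Sum>k\<in>UNIV. c k * (rt k \<bullet> v)) = (\<Sum>k\<in>UNIV. d k * (rt k \<bullet> v))"
  have "\<forall>v. (\<Sum>k\<in>UNIV. (c k - d k) * (rt k \<bullet> v)) = 0"
    using h by (simp add: left_diff_distrib sum_subtractf)
  then have "c i - d i = 0" by (rule lc_zero)
  then show ?thesis by simp
qed

lemma exists_v1: "\<exists>v1. \<forall>k. rt k \<bullet> v1 = 1"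
proof -
  define S where "S = (\<lambda>c::real^'i. (\<Sum>l\<in>UNIV. (c $ l) *\<^sub>R rt l))"
  define T where "T = (\<lambda>c::real^'i. (\<chi> k. rt k \<bullet> S c))"
  have linT: "linear T"
    unfolding T_def S_def
    by (rule linearI) (simp_all add: vec_eq_iff inner_sum_right inner_add_right scaleR_add_left sum.distrib
          sum_distrib_left algebra_simps)
  have injT: "inj T"
  proof (rule linear_inj_iff_eq_0[THEN iffD2, OF linT], intro allI impI)
    fix c assume "T c = 0"
    then have tk: "rt k \<bullet> S c = 0" for k unfolding T_def by (simp add: vec_eq_iff)
    have "S c \<bullet> S c = (\<Sum>l\<in>UNIV. (c $ l) * (rt l \<bullet> S c))"
      unfolding S_def[of] by (simp add: inner_sum_left)
    also have "\<dots> = 0" using tk by simp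
    finally have "S c = 0" by simp
    then have "c $ l = 0" for l unfolding S_def by (rule rt_real)
    then show "c = 0" by (simp add: vec_eq_iff)
  qed
  have "surj T" using linear_injective_imp_surjective[OF linT injT] by simp
  then obtain c where "T c = (\<chi> k. 1)" by (metis surjE)
  then have "rt k \<bullet> S c = 1" for k unfolding T_def by (simp add: vec_eq_iff)
  then show ?thesis by blast
qed

definition Cbar :: "(real^'d) set" where "Cbar = {v. \<forall>i. 0 \<le> rt i \<bullet> v}"

lemma closure_Cf: "closure (Cf rt) = Cbar"
proof
  show "closure (Cf rt) \<subseteq> Cbar"
  proof (rule closure_minimal)
    show "Cf rt \<subseteq> Cbar" by (auto simp: Cf_def Cbar_def less_imp_le)
    show "closed Cbar" unfolding Cbar_def
      by (rule closed_Collect_all) (rule closed_halfspace_ge)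
  qed
next
  show "Cbar \<subseteq> closure (Cf rt)"
  proof
    fix v assume v: "v \<in> Cbar"
    obtain v1 where v1: "\<forall>k. rt k \<bullet> v1 = 1" using exists_v1 by blast
    show "v \<in> closure (Cf rt)" unfolding closure_approachable
    proof (intro allI impI)
      fix e :: real assume e: "e > 0"
      define t where "t = e / (2 * (norm v1 + 1))"
      have pos: "0 < norm v1 + 1" by (metis add_nonneg_pos norm_ge_zero zero_less_one)
      then have "2 * (norm v1 + 1) > 0" by simp
      then have t0: "t > 0" using e unfolding t_def by (rule divide_pos_pos[rotated])
      have "v + t *\<^sub>R v1 \<in> Cf rt" using v v1 t0 unfolding Cf_def Cbar_def
        by (auto simp: inner_add_right add_nonneg_pos)
      moreover have "dist (v + t *\<^sub>R v1) v < e"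
      proof -
        have "dist (v + t *\<^sub>R v1) v = t * norm v1" using t0 by (simp add: dist_norm)
        also have "\<dots> < e"
        proof -
          have "t * norm v1 \<le> t * (norm v1 + 1)" using t0 by simp
          also have "\<dots> = e / 2" unfolding t_def using pos by (simp add: divide_simps)
          finally show ?thesis using e by simp
        qed
        finally show ?thesis .
      qed
      ultimately show "\<exists>y\<in>Cf rt. dist y v < e" by blast
    qed
  qed
qed

abbreviation X where "X \<equiv> tits_cone cor rt"

lemma X_iff: "x \<in> X \<longleftrightarrow> (\<exists>w\<in>W. \<exists>y\<in>Cbar. x = w y)"
  unfolding tits_cone_def closure_Cf by blast

lemma Cbar_X: "y \<in> Cbar \<Longrightarrow> y \<in> X"
proof -
  assume y: "y \<in> Cbar"
  have "y = id y" by simp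
  then show ?thesis unfolding X_iff using id_W y by blast
qed

lemma X_W: "w \<in> W \<Longrightarrow> x \<in> X \<Longrightarrow> w x \<in> X"
proof -
  assume w: "w \<in> W" and "x \<in> X"
  then obtain u y where uy: "u \<in> W" "y \<in> Cbar" "x = u y" unfolding X_iff by blast
  have "w x = (w \<circ> u) y" using uy by simp
  moreover have "w \<circ> u \<in> W" using W_comp[OF w uy(1)] .
  ultimately show ?thesis unfolding X_iff using uy(2) by blast
qed

lemma X_scale: "x \<in> X \<Longrightarrow> c > 0 \<Longrightarrow> c *\<^sub>R x \<in> X"
proof -
  assume "x \<in> X" "c > 0"
  then obtain w y where wy: "w \<in> W" "y \<in> Cbar" "x = w y" unfolding X_iff by blast
  have "c *\<^sub>R y \<in> Cbar" using wy(2) \<open>c > 0\<close> by (simp add: Cbar_def)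
  moreover have "c *\<^sub>R x = w (c *\<^sub>R y)" using wy W_linear[OF wy(1)] by (simp add: linear_scale)
  ultimately show ?thesis unfolding X_iff using wy(1) by blast
qed

end

context KM begin

definition lc :: "('i \<Rightarrow> real) \<Rightarrow> real^'d \<Rightarrow> real" where
  "lc c = (\<lambda>v. \<Sum>k\<in>UNIV. c k * (rt k \<bullet> v))"

definition Phi :: "(real^'d \<Rightarrow> real) set" where
  "Phi = {(\<lambda>v. rt i \<bullet> w v) | i w. w \<in> W}"

definition Pos :: "(real^'d \<Rightarrow> real) set" where
  "Pos = {g \<in> Phi. \<exists>c. (\<forall>k. 0 \<le> c k) \<and> g = lc c}"

definition isneg :: "(real^'d \<Rightarrow> real) \<Rightarrow> bool" where
  "isneg g \<longleftrightarrow> (\<exists>c. (\<forall>k. 0 \<le> c k) \<and> g = (\<lambda>v. - lc c v))"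

definition ray :: "(real^'d \<Rightarrow> real) \<Rightarrow> (real^'d \<Rightarrow> real) set" where
  "ray g = {(\<lambda>v. t * g v) | t. t > 0}"

definition NN :: "real^'d \<Rightarrow> (real^'d \<Rightarrow> real) set set" where
  "NN h = ray ` {g \<in> Pos. g h < 0}"

abbreviation al :: "'i \<Rightarrow> real^'d \<Rightarrow> real" where "al i \<equiv> (\<lambda>v. rt i \<bullet> v)"

lemma Phi_comp: "g \<in> Phi \<Longrightarrow> u \<in> W \<Longrightarrow> g \<circ> u \<in> Phi"
proof -
  assume "g \<in> Phi" "u \<in> W"
  then obtain i w where iw: "w \<in> W" "g = (\<lambda>v. rt i \<bullet> w v)" unfolding Phi_def by blast
  have "g \<circ> u = (\<lambda>v. rt i \<bullet> (w \<circ> u) v)" using iw by (simp add: fun_eq_iff)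
  moreover have "w \<circ> u \<in> W" using W_comp[OF iw(1) \<open>u \<in> W\<close>] .
  ultimately show ?thesis unfolding Phi_def by blast
qed

lemma al_Phi: "al i \<in> Phi"
proof -
  have "al i = (\<lambda>v. rt i \<bullet> id v)" by simp
  then show ?thesis unfolding Phi_def using id_W by blast
qed

lemma al_lc: "al i = lc (\<lambda>k. if k = i then 1 else 0)"
  unfolding lc_def by (simp add: fun_eq_iff delta_sum)

lemma al_Pos: "al i \<in> Pos"
proof -
  have "(\<forall>k. 0 \<le> (if k = i then 1 else (0::real))) \<and> al i = lc (\<lambda>k. if k = i then 1 else 0)"
    using al_lc[of i] by simp
  then have "\<exists>c. (\<forall>k. 0 \<le> c k) \<and> al i = lc c" by (rule exI[of _ "\<lambda>k. if k = i then 1 else 0"])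
  then show ?thesis unfolding Pos_def using al_Phi by blast
qed

lemma Phi_dich: "g \<in> Phi \<Longrightarrow> g \<in> Pos \<or> isneg g"
proof -
  assume g: "g \<in> Phi"
  then obtain i w where iw: "w \<in> W" "g = (\<lambda>v. rt i \<bullet> w v)" unfolding Phi_def by blast
  from dichotomy[OF iw(1), of i] show ?thesis
  proof
    assume "posf i w"
    then obtain c where c: "\<forall>k. 0 \<le> c k" "\<forall>v. rt i \<bullet> w v = (\<Sum>k\<in>UNIV. c k * (rt k \<bullet> v))"
      unfolding posf_def by (elim exE conjE) (rule that; assumption)
    have "g = lc c" using iw c unfolding lc_def by (simp add: fun_eq_iff)
    then have "g \<in> Pos" unfolding Pos_def using g c(1) by blast
    then show ?thesis by blast
  next
    assume "\<exists>c. (\<forall>k. 0 \<le> c k) \<and> (\<forall>v. rt i \<bullet> w v = - (\<Sum>k\<in>UNIV. c k * (rt k \<bullet> v)))"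
    then obtain c where c: "\<forall>k. 0 \<le> c k" "\<forall>v. rt i \<bullet> w v = - (\<Sum>k\<in>UNIV. c k * (rt k \<bullet> v))"
      by (elim exE conjE) (rule that; assumption)
    have "g = (\<lambda>v. - lc c v)" using iw c unfolding lc_def by (simp add: fun_eq_iff)
    then have "isneg g" unfolding isneg_def using c(1) by blast
    then show ?thesis by blast
  qed
qed

lemma Phi_nz: "g \<in> Phi \<Longrightarrow> \<exists>v. g v \<noteq> 0"
proof -
  assume "g \<in> Phi"
  then obtain i w where iw: "w \<in> W" "g = (\<lambda>v. rt i \<bullet> w v)" unfolding Phi_def by blast
  obtain u where u: "u \<in> W" "w \<circ> u = id" using W_inv[OF iw(1)] by blast
  have "w (u (cor i)) = cor i" using u(2) by (metis comp_apply id_apply)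
  then have "g (u (cor i)) = 2" using iw(2) rtcor_ii by simp
  then show ?thesis by (intro exI[of _ "u (cor i)"]) simp
qed

lemma lc_add: "lc c v + lc d v = lc (\<lambda>k. c k + d k) v"
  unfolding lc_def by (simp add: sum.distrib algebra_simps)

lemma lc_zero': "(\<forall>v. lc e v = 0) \<Longrightarrow> e k = 0"
  unfolding lc_def by (rule lc_zero)

lemma not_pos_neg: "g \<in> Phi \<Longrightarrow> g \<in> Pos \<Longrightarrow> isneg g \<Longrightarrow> False"
proof -
  assume g: "g \<in> Phi" "g \<in> Pos" "isneg g"
  then obtain c where c: "\<forall>k. 0 \<le> c k" "g = lc c" unfolding Pos_def by blast
  obtain d where d: "\<forall>k. 0 \<le> d k" "g = (\<lambda>v. - lc d v)" using g(3) unfolding isneg_def by blast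
  have "lc (\<lambda>k. c k + d k) v = 0" for v
  proof -
    have "lc c v = - lc d v" using fun_cong[OF c(2), of v] fun_cong[OF d(2), of v] by simp
    then show ?thesis using lc_add[of c v d] by simp
  qed
  then have "\<forall>v. lc (\<lambda>k. c k + d k) v = 0" by blast
  then have "c k + d k = 0" for k by (rule lc_zero')
  then have "c k = 0" for k using c(1) d(1) by (metis add_nonneg_eq_0_iff)
  then have "g = (\<lambda>v. 0)" using c(2) unfolding lc_def by simp
  then show False using Phi_nz[OF g(1)] by simp
qed

lemma lc_single: "(\<forall>k. k \<noteq> i \<longrightarrow> c k = 0) \<Longrightarrow> lc c = (\<lambda>v. c i * (rt i \<bullet> v))"
proof -
  assume h: "\<forall>k. k \<noteq> i \<longrightarrow> c k = 0"
  have "lc c v = c i * (rt i \<bullet> v)" for v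
  proof -
    have "lc c v = (\<Sum>k\<in>UNIV. if k = i then c k * (rt k \<bullet> v) else 0)"
      unfolding lc_def by (rule sum.cong) (use h in auto)
    then show ?thesis by (simp add: sum.delta)
  qed
  then show ?thesis by (simp add: fun_eq_iff)
qed

lemma mult_pos: "g \<in> Pos \<Longrightarrow> g = (\<lambda>v. t * (rt i \<bullet> v)) \<Longrightarrow> t > 0"
proof -
  assume g: "g \<in> Pos" "g = (\<lambda>v. t * (rt i \<bullet> v))"
  then obtain c where c: "\<forall>k. 0 \<le> c k" "g = lc c" "g \<in> Phi" unfolding Pos_def by blast
  have "lc (\<lambda>k. if k = i then t else 0) = g"
    using lc_single[of i "\<lambda>k. if k = i then t else 0"] g(2) by simp
  then have "\<forall>v. (\<Sum>k\<in>UNIV. c k * (rt k \<bullet> v)) = (\<Sum>k\<in>UNIV. (if k = i then t else 0) * (rt k \<bullet> v))"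
    using c(2) unfolding lc_def by metis
  then have "c i = t" using lc_inj[of c "\<lambda>k. if k = i then t else 0" i] by simp
  then have "t \<ge> 0" using c(1) by metis
  moreover have "t \<noteq> 0"
  proof
    assume "t = 0" then have "g = (\<lambda>v. 0)" using g(2) by simp
    then show False using Phi_nz[OF c(3)] by simp
  qed
  ultimately show ?thesis by simp
qed

lemma lc_upd: "lc (c(i := a)) v = lc c v + (a - c i) * (rt i \<bullet> v)"
proof -
  have "lc (c(i := a)) v = (\<Sum>k\<in>UNIV. c k * (rt k \<bullet> v) + (if k = i then (a - c i) * (rt k \<bullet> v) else 0))"
    unfolding lc_def by (rule sum.cong) (auto simp: algebra_simps)
  also have "\<dots> = lc c v + (a - c i) * (rt i \<bullet> v)"
    unfolding lc_def by (simp add: sum.distrib sum.delta)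
  finally show ?thesis .
qed

lemma lc_r: "lc c (r i v) = lc c v - (rt i \<bullet> v) * lc c (cor i)"
  unfolding lc_def r_apply by (simp add: inner_diff_right sum_subtractf sum_distrib_left algebra_simps)

lemma pos_refl:
  assumes g: "g \<in> Pos" and nm: "\<not> (\<exists>t. g = (\<lambda>v. t * (rt i \<bullet> v)))"
  shows "g \<circ> r i \<in> Pos"
proof -
  obtain c where c: "\<forall>k. 0 \<le> c k" "g = lc c" "g \<in> Phi" using g unfolding Pos_def by blast
  obtain k where k: "k \<noteq> i" "c k \<noteq> 0"
  proof (rule ccontr)
    assume "\<not> thesis"
    then have "\<forall>k. k \<noteq> i \<longrightarrow> c k = 0" using that by blast
    then have "g = (\<lambda>v. c i * (rt i \<bullet> v))" using c(2) lc_single by simp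
    then show False using nm by blast
  qed
  define c' where "c' = c(i := c i - lc c (cor i))"
  have gr: "g \<circ> r i = lc c'"
    unfolding c'_def by (simp add: fun_eq_iff c(2) lc_upd lc_r algebra_simps)
  have Phi': "g \<circ> r i \<in> Phi" using Phi_comp[OF c(3) r_in_W] .
  have "\<not> isneg (g \<circ> r i)"
  proof
    assume "isneg (g \<circ> r i)"
    then obtain d where d: "\<forall>k. 0 \<le> d k" "g \<circ> r i = (\<lambda>v. - lc d v)" unfolding isneg_def by blast
    have "lc (\<lambda>k. c' k + d k) v = 0" for v
    proof -
      have "lc c' v = - lc d v" using fun_cong[OF gr, of v] fun_cong[OF d(2), of v] by simp
      then show ?thesis using lc_add[of c' v d] by simp
    qed
    then have "\<forall>v. lc (\<lambda>k. c' k + d k) v = 0" by blast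
    then have "c' k + d k = 0" by (rule lc_zero')
    then have "c k + d k = 0" using k(1) unfolding c'_def by simp
    then show False using c(1) d(1) k(2) by (metis add_nonneg_eq_0_iff)
  qed
  then show ?thesis using Phi_dich[OF Phi'] by blast
qed

end

context KM begin

lemma ray_scale: "t > 0 \<Longrightarrow> ray (\<lambda>v. t * g v) = ray g"
proof
  assume t: "t > 0"
  show "ray (\<lambda>v. t * g v) \<subseteq> ray g"
  proof
    fix f assume "f \<in> ray (\<lambda>v. t * g v)"
    then obtain s where s: "s > 0" "f = (\<lambda>v. s * (t * g v))" unfolding ray_def by blast
    then have "f = (\<lambda>v. (s * t) * g v)" by (simp add: mult.assoc)
    moreover have "s * t > 0" using s t by simp
    ultimately show "f \<in> ray g" unfolding ray_def by blast
  qed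
  show "ray g \<subseteq> ray (\<lambda>v. t * g v)"
  proof
    fix f assume "f \<in> ray g"
    then obtain s where s: "s > 0" "f = (\<lambda>v. s * g v)" unfolding ray_def by blast
    then have "f = (\<lambda>v. (s / t) * (t * g v))" using t by (simp add: fun_eq_iff)
    moreover have "s / t > 0" using s t by simp
    ultimately show "f \<in> ray (\<lambda>v. t * g v)" unfolding ray_def by blast
  qed
qed

lemma ray_comp: "ray (g \<circ> u) = (\<lambda>f. f \<circ> u) ` ray g"
proof
  show "ray (g \<circ> u) \<subseteq> (\<lambda>f. f \<circ> u) ` ray g"
  proof
    fix f assume "f \<in> ray (g \<circ> u)"
    then obtain s where s: "s > 0" "f = (\<lambda>v. s * (g \<circ> u) v)" unfolding ray_def by blast
    then have "f = (\<lambda>v. s * g v) \<circ> u" by (simp add: fun_eq_iff)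
    moreover have "(\<lambda>v. s * g v) \<in> ray g" using s unfolding ray_def by blast
    ultimately show "f \<in> (\<lambda>f. f \<circ> u) ` ray g" by blast
  qed
  show "(\<lambda>f. f \<circ> u) ` ray g \<subseteq> ray (g \<circ> u)"
  proof
    fix f assume "f \<in> (\<lambda>f. f \<circ> u) ` ray g"
    then obtain f0 where f0: "f0 \<in> ray g" "f = f0 \<circ> u" by blast
    then obtain s where s: "s > 0" "f0 = (\<lambda>v. s * g v)" unfolding ray_def by blast
    then have "f = (\<lambda>v. s * (g \<circ> u) v)" using f0 by (simp add: fun_eq_iff)
    then show "f \<in> ray (g \<circ> u)" using s unfolding ray_def by blast
  qed
qed

lemma ray_self: "g \<in> ray g"
  unfolding ray_def mem_Collect_eq by (rule exI[of _ 1]) simp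

lemma ray_eq: "ray g = ray h \<Longrightarrow> \<exists>t>0. g = (\<lambda>v. t * h v)"
  using ray_self[of g] unfolding ray_def by auto

lemma rt_rr: "rt i \<bullet> r i v = - (rt i \<bullet> v)"
  by (simp add: rt_r Aii)

lemma gr_r: "(g \<circ> r i) \<circ> r i = g" by (simp add: fun_eq_iff)

definition II :: "'i list \<Rightarrow> (real^'d \<Rightarrow> real) set" where
  "II l = {g \<in> Pos. g \<circ> wp l \<notin> Pos}"

lemma II_fin: "finite (ray ` II l)"
proof (induction l)
  case Nil then show ?case by (simp add: II_def)
next
  case (Cons i l)
  let ?F = "\<lambda>\<rho>. (\<lambda>f. f \<circ> r i) ` \<rho>"
  have "ray ` II (i # l) \<subseteq> insert (ray (al i)) (?F ` (ray ` II l))"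
  proof
    fix \<rho> assume "\<rho> \<in> ray ` II (i # l)"
    then obtain g where g: "g \<in> Pos" "g \<circ> (r i \<circ> wp l) \<notin> Pos" "\<rho> = ray g"
      unfolding II_def by auto
    show "\<rho> \<in> insert (ray (al i)) (?F ` (ray ` II l))"
    proof (cases "\<exists>t. g = (\<lambda>v. t * (rt i \<bullet> v))")
      case True
      then obtain t where t: "g = (\<lambda>v. t * (rt i \<bullet> v))" by blast
      have "t > 0" using mult_pos[OF g(1) t] .
      then have "ray g = ray (al i)" using t ray_scale[of t "al i"] by simp
      then show ?thesis using g(3) by simp
    next
      case False
      have g'P: "g \<circ> r i \<in> Pos" using pos_refl[OF g(1) False] .
      have "(g \<circ> r i) \<circ> wp l \<notin> Pos" using g(2) by (simp add: comp_assoc)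
      then have "g \<circ> r i \<in> II l" using g'P unfolding II_def by blast
      moreover have "\<rho> = ?F (ray (g \<circ> r i))" using g(3) ray_comp[of "g \<circ> r i" "r i"] gr_r[of g i] by simp
      ultimately show ?thesis by blast
    qed
  qed
  then show ?case by (rule finite_subset) (simp add: Cons.IH)
qed

lemma lc_nonneg: "\<forall>k. 0 \<le> c k \<Longrightarrow> y \<in> Cbar \<Longrightarrow> lc c y \<ge> 0"
  unfolding lc_def Cbar_def by (auto intro!: sum_nonneg)

lemma NN_fin: "h \<in> X \<Longrightarrow> finite (NN h)"
proof -
  assume "h \<in> X"
  then obtain w y where wy: "w \<in> W" "y \<in> Cbar" "h = w y" unfolding X_iff by blast
  then obtain l where l: "w = wp l" by (auto simp: W_eq)
  have "{g \<in> Pos. g h < 0} \<subseteq> II l"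
  proof
    fix g assume g: "g \<in> {g \<in> Pos. g h < 0}"
    have "g \<circ> wp l \<notin> Pos"
    proof
      assume "g \<circ> wp l \<in> Pos"
      then obtain c where c: "\<forall>k. 0 \<le> c k" "g \<circ> wp l = lc c" unfolding Pos_def by blast
      have "g h = lc c y" using fun_cong[OF c(2), of y] wy(3) l by simp
      then show False using lc_nonneg[OF c(1) wy(2)] g by simp
    qed
    then show "g \<in> II l" using g unfolding II_def by blast
  qed
  then have "NN h \<subseteq> ray ` II l" unfolding NN_def by blast
  then show ?thesis using II_fin[of l] by (rule finite_subset)
qed

lemma NN_dec:
  assumes fin: "finite (NN z)" and neg: "rt i \<bullet> z < 0"
  shows "finite (NN (r i z)) \<and> card (NN (r i z)) < card (NN z)"
proof -
  let ?F = "\<lambda>\<rho>. (\<lambda>f. f \<circ> r i) ` \<rho>"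
  have mem: "ray (al i) \<in> NN z" unfolding NN_def using al_Pos neg by blast
  have incl: "NN (r i z) \<subseteq> ?F ` (NN z - {ray (al i)})"
  proof
    fix \<rho> assume "\<rho> \<in> NN (r i z)"
    then obtain g where g: "g \<in> Pos" "g (r i z) < 0" "\<rho> = ray g" unfolding NN_def by blast
    show "\<rho> \<in> ?F ` (NN z - {ray (al i)})"
    proof (cases "\<exists>t. g = (\<lambda>v. t * (rt i \<bullet> v))")
      case True
      then obtain t where t: "g = (\<lambda>v. t * (rt i \<bullet> v))" by blast
      have "t > 0" using mult_pos[OF g(1) t] .
      have "g (r i z) = t * (- (rt i \<bullet> z))" using t rt_rr by simp
      moreover have "t * (- (rt i \<bullet> z)) > 0" using \<open>t > 0\<close> neg by (simp add: mult_pos_neg)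
      ultimately show ?thesis using g(2) by simp
    next
      case False
      have g'P: "g \<circ> r i \<in> Pos" using pos_refl[OF g(1) False] .
      have "(g \<circ> r i) z < 0" using g(2) by simp
      then have inN: "ray (g \<circ> r i) \<in> NN z" unfolding NN_def using g'P by blast
      have ne: "ray (g \<circ> r i) \<noteq> ray (al i)"
      proof
        assume "ray (g \<circ> r i) = ray (al i)"
        then obtain s where s: "s > 0" "g \<circ> r i = (\<lambda>v. s * (rt i \<bullet> v))" using ray_eq by blast
        have "g = (g \<circ> r i) \<circ> r i" by (simp add: gr_r)
        also have "\<dots> = (\<lambda>v. (- s) * (rt i \<bullet> v))"
        proof
          fix v
          have "((g \<circ> r i) \<circ> r i) v = (g \<circ> r i) (r i v)" by (simp only: comp_apply)
          also have "\<dots> = s * (rt i \<bullet> r i v)" unfolding s(2) by (rule refl)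
          finally show "((g \<circ> r i) \<circ> r i) v = (- s) * (rt i \<bullet> v)" by (simp add: rt_rr)
        qed
        finally show False using False by blast
      qed
      have "\<rho> = ?F (ray (g \<circ> r i))" using g(3) ray_comp[of "g \<circ> r i" "r i"] gr_r[of g i] by simp
      then show ?thesis using inN ne by blast
    qed
  qed
  have f2: "finite (?F ` (NN z - {ray (al i)}))" using fin by simp
  have "finite (NN (r i z))" using finite_subset[OF incl f2] .
  moreover have "card (NN (r i z)) \<le> card (?F ` (NN z - {ray (al i)}))" using card_mono[OF f2 incl] .
  moreover have "card (?F ` (NN z - {ray (al i)})) \<le> card (NN z - {ray (al i)})"
    using fin by (simp add: card_image_le)
  moreover have "card (NN z - {ray (al i)}) < card (NN z)" by (rule card_Diff1_less[OF fin mem])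
  ultimately show ?thesis by linarith
qed

lemma fin_X_ind: "\<forall>z. card (NN z) = n \<longrightarrow> finite (NN z) \<longrightarrow> z \<in> X"
proof (induction n rule: less_induct)
  case (less n)
  show ?case
  proof (intro allI impI)
    fix z assume cz: "card (NN z) = n" and fz: "finite (NN z)"
    show "z \<in> X"
    proof (cases "z \<in> Cbar")
      case True then show ?thesis by (rule Cbar_X)
    next
      case False
      then obtain i where i: "rt i \<bullet> z < 0" unfolding Cbar_def by (auto simp: not_le)
      from NN_dec[OF fz i] have "finite (NN (r i z))" "card (NN (r i z)) < n" using cz by auto
      then have "r i z \<in> X" using less.IH by blast
      then have "r i (r i z) \<in> X" by (rule X_W[OF r_in_W])
      then show ?thesis by simp
    qed
  qed
qed

lemma fin_X: "finite (NN z) \<Longrightarrow> z \<in> X" using fin_X_ind by blast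

lemma lc_comb2: "lc c (a *\<^sub>R x + b *\<^sub>R y) = a * lc c x + b * lc c y"
proof -
  have "lc c (a *\<^sub>R x + b *\<^sub>R y) = (\<Sum>k\<in>UNIV. a * (c k * (rt k \<bullet> x)) + b * (c k * (rt k \<bullet> y)))"
    unfolding lc_def by (rule sum.cong) (simp_all add: inner_add_right algebra_simps)
  also have "\<dots> = a * lc c x + b * lc c y" unfolding lc_def by (simp add: sum.distrib sum_distrib_left)
  finally show ?thesis .
qed

lemma lc_comb: "lc c ((1 - u) *\<^sub>R x + u *\<^sub>R y) = (1 - u) * lc c x + u * lc c y"
  by (rule lc_comb2)

lemma convex_X: "convex X"
  unfolding convex_alt
proof (intro ballI allI impI)
  fix x y and u :: real assume x: "x \<in> X" and y: "y \<in> X" and u: "0 \<le> u \<and> u \<le> 1"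
  define z where "z = (1 - u) *\<^sub>R x + u *\<^sub>R y"
  have "{g \<in> Pos. g z < 0} \<subseteq> {g \<in> Pos. g x < 0} \<union> {g \<in> Pos. g y < 0}"
  proof
    fix g assume g: "g \<in> {g \<in> Pos. g z < 0}"
    then obtain c where c: "g = lc c" unfolding Pos_def by blast
    have "g z = (1 - u) * g x + u * g y" unfolding c z_def by (rule lc_comb)
    moreover have "(1 - u) * g x + u * g y \<ge> 0" if "g x \<ge> 0" "g y \<ge> 0"
      using that u by simp
    ultimately show "g \<in> {g \<in> Pos. g x < 0} \<union> {g \<in> Pos. g y < 0}" using g by force
  qed
  then have "NN z \<subseteq> NN x \<union> NN y" unfolding NN_def by blast
  then have "finite (NN z)" using NN_fin[OF x] NN_fin[OF y] by (meson finite_UnI finite_subset)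
  then show "(1 - u) *\<^sub>R x + u *\<^sub>R y \<in> X" using fin_X unfolding z_def by blast
qed

end

context KM begin

abbreviation dom where "dom \<equiv> dom_elt cor rt"

lemma dom_prop:
  assumes "x \<in> Yplus cor rt"
  shows "\<exists>u\<in>W. dom x = u x \<and> dom x \<in> Yset \<and> dom x \<in> Cbar"
proof -
  have xY: "x \<in> Yset" and xX: "x \<in> X" using assms by (auto simp: Yplus_def)
  obtain w y where wy: "w \<in> W" "y \<in> Cbar" "x = w y" using xX unfolding X_iff by blast
  obtain u where u: "u \<in> W" "u \<circ> w = id" "w \<circ> u = id" using W_inv[OF wy(1)] by blast
  have uxy: "u x = y" using u(2) wy(3) by (metis comp_apply id_apply)
  have yY: "y \<in> Yset" using W_Y[OF u(1) xY] uxy by simp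
  have inS: "y \<in> (\<lambda>w. w x) ` W \<inter> closure (Cf rt)"
    using u(1) uxy wy(2) closure_Cf by force
  have un: "\<mu> = y" if mu: "\<mu> \<in> (\<lambda>w. w x) ` W \<inter> closure (Cf rt)" for \<mu>
  proof -
    obtain v where v: "v \<in> W" "\<mu> = v x" using mu by blast
    have muC: "\<mu> \<in> Cbar" using mu closure_Cf by blast
    have muY: "\<mu> \<in> Yset" using W_Y[OF v(1) xY] v(2) by simp
    have "(v \<circ> w) y = \<mu>" using v(2) wy(3) by simp
    then have "y = \<mu>"
      using uniq[OF yY _ muY _ W_comp[OF v(1) wy(1)]] yY muY wy(2) muC unfolding Cbar_def by blast
    then show ?thesis by simp
  qed
  have "dom x = y" unfolding dom_elt_def by (rule the_equality[of "\<lambda>\<mu>. \<mu> \<in> (\<lambda>w. w x) ` W \<inter> closure (Cf rt)", OF inS un])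
  then show ?thesis using u(1) uxy yY wy(2) by metis
qed

lemma dom_le:
  assumes "x \<in> Yplus cor rt" "w \<in> W"
  shows "dom x - w x \<in> Qcor_plus cor"
proof -
  obtain u where u: "u \<in> W" "dom x = u x" "dom x \<in> Yset" "dom x \<in> Cbar" using dom_prop[OF assms(1)] by blast
  obtain v where v: "v \<in> W" "v \<circ> u = id" using W_inv[OF u(1)] by blast
  have "x = v (dom x)" using u(2) v(2) by (metis comp_apply id_apply)
  then have "w x = (w \<circ> v) (dom x)" by simp
  moreover have "dom x - (w \<circ> v) (dom x) \<in> Qcor_plus cor"
    using dom_Q[OF u(3) _ W_comp[OF assms(2) v(1)]] u(4) unfolding Cbar_def by blast
  ultimately show ?thesis by simp
qed

lemma part1:
  assumes l: "l \<in> Yplus cor rt" and m: "\<mu> \<in> Yplus cor rt"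
  shows "leQ cor (dom (l + \<mu>)) (dom l + dom \<mu>)"
proof -
  have lY: "l \<in> Yset" "l \<in> X" and mY: "\<mu> \<in> Yset" "\<mu> \<in> X" using l m by (auto simp: Yplus_def)
  have "(1 - 1/2) *\<^sub>R l + (1/2) *\<^sub>R \<mu> \<in> X"
    using convex_X[unfolded convex_alt, rule_format, OF lY(2) mY(2), of "1/2"] by simp
  then have "(2::real) *\<^sub>R ((1 - 1/2) *\<^sub>R l + (1/2) *\<^sub>R \<mu>) \<in> X" by (rule X_scale) simp
  moreover have "(2::real) *\<^sub>R ((1 - 1/2) *\<^sub>R l + (1/2) *\<^sub>R \<mu>) = l + \<mu>"
    by (simp add: scaleR_add_right)
  ultimately have lmX: "l + \<mu> \<in> X" by simp
  have lmP: "l + \<mu> \<in> Yplus cor rt" using lmX Yset_add[OF lY(1) mY(1)] by (simp add: Yplus_def)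
  obtain w where w: "w \<in> W" "dom (l + \<mu>) = w (l + \<mu>)" using dom_prop[OF lmP] by blast
  have "w (l + \<mu>) = w l + w \<mu>" using W_linear[OF w(1)] by (simp add: linear_add)
  then have "(dom l + dom \<mu>) - dom (l + \<mu>) = (dom l - w l) + (dom \<mu> - w \<mu>)" using w(2) by simp
  also have "\<dots> \<in> Qcor_plus cor" using dom_le[OF l w(1)] dom_le[OF m w(1)] by (rule Qp_add)
  finally show ?thesis unfolding leQ_def .
qed

lemma convex_K: "convex {x0 - (\<Sum>k\<in>UNIV. c k *\<^sub>R cor k) | c. \<forall>k. 0 \<le> c k}"
  unfolding convex_alt
proof (intro ballI allI impI)
  fix x y and u :: real
  assume x: "x \<in> {x0 - (\<Sum>k\<in>UNIV. c k *\<^sub>R cor k) | c. \<forall>k. 0 \<le> c k}"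
    and y: "y \<in> {x0 - (\<Sum>k\<in>UNIV. c k *\<^sub>R cor k) | c. \<forall>k. 0 \<le> c k}" and u: "0 \<le> u \<and> u \<le> 1"
  obtain c where c: "\<forall>k. 0 \<le> c k" "x = x0 - (\<Sum>k\<in>UNIV. c k *\<^sub>R cor k)" using x by blast
  obtain d where d: "\<forall>k. 0 \<le> d k" "y = x0 - (\<Sum>k\<in>UNIV. d k *\<^sub>R cor k)" using y by blast
  have s: "(\<Sum>k\<in>UNIV. ((1 - u) * c k + u * d k) *\<^sub>R cor k)
      = (1 - u) *\<^sub>R (\<Sum>k\<in>UNIV. c k *\<^sub>R cor k) + u *\<^sub>R (\<Sum>k\<in>UNIV. d k *\<^sub>R cor k)"
    by (simp add: scaleR_add_left sum.distrib scaleR_sum_right)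
  have "(1 - u) *\<^sub>R x + u *\<^sub>R y = x0 - (\<Sum>k\<in>UNIV. ((1 - u) * c k + u * d k) *\<^sub>R cor k)"
    unfolding c(2) d(2) s by (simp add: algebra_simps)
  moreover have "\<forall>k. 0 \<le> (1 - u) * c k + u * d k" using c(1) d(1) u by simp
  ultimately show "(1 - u) *\<^sub>R x + u *\<^sub>R y \<in> {x0 - (\<Sum>k\<in>UNIV. c k *\<^sub>R cor k) | c. \<forall>k. 0 \<le> c k}"
    unfolding mem_Collect_eq by (intro exI[of _ "\<lambda>k. (1 - u) * c k + u * d k"]) simp
qed

end

context KM begin

lemma hull_W_inv:
  assumes "w \<in> W"
  shows "w ` (convex hull ((\<lambda>v. v x0) ` W)) \<subseteq> convex hull ((\<lambda>v. v x0) ` W)"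
proof -
  have "w ` (convex hull ((\<lambda>v. v x0) ` W)) = convex hull (w ` ((\<lambda>v. v x0) ` W))"
    by (rule convex_hull_linear_image[OF W_linear[OF assms]])
  also have "\<dots> \<subseteq> convex hull ((\<lambda>v. v x0) ` W)"
  proof (rule hull_mono, rule subsetI)
    fix z assume "z \<in> w ` ((\<lambda>v. v x0) ` W)"
    then obtain v where v: "v \<in> W" "z = w (v x0)" by blast
    then have "z = (w \<circ> v) x0" by simp
    moreover have "w \<circ> v \<in> W" using W_comp[OF assms v(1)] .
    ultimately show "z \<in> (\<lambda>v. v x0) ` W" by blast
  qed
  finally show ?thesis .
qed

lemma hull_le:
  assumes x0: "x0 \<in> Yset" "x0 \<in> Cbar" and z: "z \<in> convex hull ((\<lambda>v. v x0) ` W)" and zq: "z - x0 \<in> Qcor cor"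
  shows "x0 - z \<in> Qcor_plus cor"
proof -
  let ?K = "{x0 - (\<Sum>k\<in>UNIV. c k *\<^sub>R cor k) | c. \<forall>k. 0 \<le> c k}"
  have sub: "(\<lambda>v. v x0) ` W \<subseteq> ?K"
  proof
    fix y assume "y \<in> (\<lambda>v. v x0) ` W"
    then obtain v where v: "v \<in> W" "y = v x0" by blast
    have "x0 - v x0 \<in> Qcor_plus cor" using dom_Q[OF x0(1) _ v(1)] x0(2) unfolding Cbar_def by blast
    then obtain n where n: "x0 - v x0 = (\<Sum>i\<in>UNIV. of_nat (n i) *\<^sub>R cor i)" by (auto simp: Qp_iff)
    then have "y = x0 - (\<Sum>i\<in>UNIV. of_nat (n i) *\<^sub>R cor i)" using v(2) by (simp add: algebra_simps)
    then show "y \<in> ?K" unfolding mem_Collect_eq by (intro exI[of _ "\<lambda>i. of_nat (n i)"]) simp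
  qed
  have "z \<in> ?K" using hull_minimal[of _ _ convex, OF sub convex_K[of x0]] z by blast
  then obtain c where c: "\<forall>k. 0 \<le> c k" "z = x0 - (\<Sum>k\<in>UNIV. c k *\<^sub>R cor k)" by blast
  obtain m where m: "z - x0 = (\<Sum>i\<in>UNIV. of_int (m i) *\<^sub>R cor i)" using zq by (auto simp: Q_iff)
  have "(\<Sum>k\<in>UNIV. (c k + of_int (m k)) *\<^sub>R cor k) = (\<Sum>k\<in>UNIV. c k *\<^sub>R cor k) + (z - x0)"
    unfolding m by (simp add: scaleR_add_left sum.distrib)
  also have "\<dots> = 0" using c(2) by simp
  finally have ck: "c k + of_int (m k) = 0" for k by (rule cor_real)
  have "x0 - z = (\<Sum>k\<in>UNIV. c k *\<^sub>R cor k)" using c(2) by simp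
  also have "\<dots> = (\<Sum>k\<in>UNIV. of_nat (nat (- m k)) *\<^sub>R cor k)"
  proof (rule sum.cong[OF refl])
    fix k
    have ckv: "c k = of_int (- m k)" using ck[of k] by simp
    have "(0::real) \<le> of_int (- m k)" using c(1) ckv by metis
    then have "- m k \<ge> 0" by simp
    note ckv this
    then show "c k *\<^sub>R cor k = of_nat (nat (- m k)) *\<^sub>R cor k" using ckv by simp
  qed
  finally show ?thesis unfolding Qp_iff by (rule exI[of _ "\<lambda>k. nat (- m k)"])
qed

lemma part2:
  assumes mu: "\<mu> \<in> Yplus cor rt" and nu: "\<nu> \<in> foldr (R_i cor rt) is {\<mu>}"
  shows "\<nu> \<in> Yplus cor rt \<and> leQ cor (dom \<nu>) (dom \<mu>)"
proof -
  obtain u where u: "u \<in> W" "dom \<mu> = u \<mu>" "dom \<mu> \<in> Yset" "dom \<mu> \<in> Cbar" using dom_prop[OF mu] by blast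
  define x0 where "x0 = dom \<mu>"
  have x0: "x0 \<in> Yset" "x0 \<in> Cbar" using u unfolding x0_def by auto
  obtain v where v: "v \<in> W" "v \<circ> u = id" using W_inv[OF u(1)] by blast
  have muv: "\<mu> = v x0" using u(2) v(2) unfolding x0_def by (metis comp_apply id_apply)
  define H where "H = convex hull ((\<lambda>w. w x0) ` W)"
  define S where "S = H \<inter> {x0 + q | q. q \<in> Qcor cor}"
  have muS: "\<mu> \<in> S"
  proof -
    have "\<mu> \<in> H" unfolding H_def muv by (rule hull_inc) (use v(1) in blast)
    moreover have "x0 - \<mu> \<in> Qcor cor" using Qp_Q[OF dom_Q[OF x0(1) _ v(1)]] x0(2) muv unfolding Cbar_def by blast
    then have "\<mu> - x0 \<in> Qcor cor" using Q_neg by fastforce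
    then have "\<mu> \<in> {x0 + q | q. q \<in> Qcor cor}" by (intro CollectI exI[of _ "\<mu> - x0"]) simp
    ultimately show ?thesis unfolding S_def by blast
  qed
  have convH: "convex H" unfolding H_def by (rule convex_convex_hull)
  have step: "R_i cor rt i E \<subseteq> S" if E: "E \<subseteq> S" for i E
  proof
    fix y assume y: "y \<in> R_i cor rt i E"
    have EH: "E \<subseteq> H" using E unfolding S_def by blast
    have "r i ` E \<subseteq> r i ` H" using EH by blast
    also have "\<dots> \<subseteq> H" unfolding H_def by (rule hull_W_inv[OF r_in_W])
    finally have "E \<union> r i ` E \<subseteq> H" using EH by blast
    then have "convex hull (E \<union> r i ` E) \<subseteq> H" using convH by (rule hull_minimal)
    then have yH: "y \<in> H" using y unfolding R_i_def by blast
    obtain e q where eq: "y = e + q" "e \<in> E" "q \<in> Qcor cor" using y unfolding R_i_def by blast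
    obtain q' where q': "e = x0 + q'" "q' \<in> Qcor cor" using E eq(2) unfolding S_def by blast
    have "y = x0 + (q' + q)" using eq q' by simp
    moreover have "q' + q \<in> Qcor cor" using Q_add[OF q'(2) eq(3)] .
    ultimately have "y \<in> {x0 + q | q. q \<in> Qcor cor}" by blast
    then show "y \<in> S" using yH unfolding S_def by blast
  qed
  have "foldr (R_i cor rt) l {\<mu>} \<subseteq> S" for l
  proof (induction l)
    case Nil then show ?case using muS by simp
  next
    case (Cons i l) then show ?case using step by simp
  qed
  then have nuS: "\<nu> \<in> S" using nu by blast
  then obtain q where q: "\<nu> = x0 + q" "q \<in> Qcor cor" "\<nu> \<in> H" unfolding S_def by blast
  have nuY: "\<nu> \<in> Yset" using q Yset_add[OF x0(1) Q_Y[OF q(2)]] by simp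
  have HX: "H \<subseteq> X"
  proof -
    have "(\<lambda>w. w x0) ` W \<subseteq> X" using X_W Cbar_X[OF x0(2)] by blast
    then show ?thesis unfolding H_def using convex_X by (rule hull_minimal)
  qed
  have nuP: "\<nu> \<in> Yplus cor rt" using nuY HX q(3) unfolding Yplus_def by blast
  obtain w where w: "w \<in> W" "dom \<nu> = w \<nu>" using dom_prop[OF nuP] by blast
  have "w \<nu> \<in> H" using hull_W_inv[OF w(1), of x0] q(3) unfolding H_def by blast
  moreover have "w \<nu> - x0 \<in> Qcor cor"
  proof -
    have eq: "w \<nu> - x0 = (w \<nu> - \<nu>) + q" using q(1) by (simp add: algebra_simps)
    show ?thesis unfolding eq by (rule Q_add[OF W_coset[OF w(1) nuY] q(2)])
  qed
  ultimately have "x0 - w \<nu> \<in> Qcor_plus cor" using hull_le[OF x0] unfolding H_def by blast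
  then have "leQ cor (dom \<nu>) (dom \<mu>)" unfolding leQ_def using w(2) x0_def by simp
  then show ?thesis using nuP by blast
qed

end

theorem mainTheorem8:
  fixes A :: "'i::finite \<Rightarrow> 'i \<Rightarrow> int"
    and cor rt :: "'i \<Rightarrow> real^'d"
  assumes "root_datum A cor rt"
  shows "(\<forall>l\<in>Yplus cor rt. \<forall>\<mu>\<in>Yplus cor rt.
            leQ cor (dom_elt cor rt (l + \<mu>)) (dom_elt cor rt l + dom_elt cor rt \<mu>))
       \<and> (\<forall>\<mu>\<in>Yplus cor rt. \<forall>v\<in>kmr_W cor rt. \<forall>\<nu>\<in>R_w cor rt v \<mu>.
            \<nu> \<in> Yplus cor rt \<and> leQ cor (dom_elt cor rt \<nu>) (dom_elt cor rt \<mu>))"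
proof -
  interpret KM A cor rt by (rule KM.intro) (rule assms)
  have P1: "\<forall>l\<in>Yplus cor rt. \<forall>\<mu>\<in>Yplus cor rt.
            leQ cor (dom_elt cor rt (l + \<mu>)) (dom_elt cor rt l + dom_elt cor rt \<mu>)"
    using part1 by blast
  have P2: "\<forall>\<mu>\<in>Yplus cor rt. \<forall>v\<in>kmr_W cor rt. \<forall>\<nu>\<in>R_w cor rt v \<mu>.
            \<nu> \<in> Yplus cor rt \<and> leQ cor (dom_elt cor rt \<nu>) (dom_elt cor rt \<mu>)"
  proof (intro ballI)
    fix \<mu> v \<nu> assume mu: "\<mu> \<in> Yplus cor rt" and "v \<in> kmr_W cor rt" and nu: "\<nu> \<in> R_w cor rt v \<mu>"
    then obtain l where "\<nu> \<in> foldr (R_i cor rt) l {\<mu>}" unfolding R_w_def by blast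
    then show "\<nu> \<in> Yplus cor rt \<and> leQ cor (dom_elt cor rt \<nu>) (dom_elt cor rt \<mu>)"
      by (rule part2[OF mu])
  qed
  show ?thesis using P1 P2 by blast
qed


end
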